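(* Let $1<p<\infty$, let $\Omega\subseteq\mathbb{R}^N$ be open, let $Z:\Omega\to\mathbb{R}^\ell$, let $V\ge 0$ and $W\in L^1_{loc}(\Omega)$ be functions on $\Omega$ with $V|Z|^p\in L^1_{loc}(\Omega)$, and let $\lambda>0$. Assume there exists a real-valued, nowhere vanishing $\phi\in C^1(\Omega)$ solving in the distributional sense in $\Omega$ $$-\mathrm{div}_{\mathcal{L}}\left(V\,|\nabla_{\mathcal{L}}\phi\cdot Z|^{p-2}(\nabla_{\mathcal{L}}\phi\cdot Z)\,Z\right)=\lambda W|\phi|^{p-2}\phi,$$ i.e. $\int_\Omega V|\nabla_{\mathcal{L}}\phi\cdot Z|^{p-2}(\nabla_{\mathcal{L}}\phi\cdot Z)(\nabla_{\mathcal{L}}\varphi\cdot Z)\,dx=\lambda\int_\Omega W|\phi|^{p-2}\phi\,\varphi\,dx$ for all test functions $\varphi\in C_c^\infty(\Omega)$. Then for every complex-valued $u\in C_0^\infty(\Omega)$, $$\int_\Omega V|\nabla_{\mathcal{L}}u\cdot Z|^p\,dx=\lambda\int_\Omega W|u|^p\,dx+\int_\Omega C_p\left(V^{1/p}\nabla_{\mathcal{L}}u\cdot Z,\;V^{1/p}\phi\,\nabla_{\mathcal{L}}\!\left(\frac{u}{\phi}\right)\cdot Z\right)dx.$$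
   Context: Let $\sigma=(\sigma_{ij})$ be an $\ell\times N$ real matrix-valued function on $\mathbb{R}^N$ with $\sigma_{ij}$ and $\partial_{x_j}\sigma_{ij}$ continuous. The horizontal gradient is $\nabla_{\mathcal{L}}:=\sigma\nabla$ (Euclidean gradient $\nabla$), and for a vector field $F$, $\mathrm{div}_{\mathcal{L}}F:=\mathrm{div}(\sigma^TF)$. For $a,b$ vectors, $a\cdot b=\sum_ia_ib_i$ (no conjugation). For $1<p<\infty$ and $\xi,\eta\in\mathbb{C}^k$, $C_p(\xi,\eta):=|\xi|^p-|\xi-\eta|^p-p|\xi-\eta|^{p-2}\mathrm{Re}\big((\xi-\eta)\cdot\overline{\eta}\big)\ (\ge0)$; here it is applied with $k=1$. *)

theory Defs
  imports "HOL-Analysis.Analysis"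
begin

definition partial_exists :: "'n::finite \<Rightarrow> (real^'n \<Rightarrow> 'a::real_normed_vector) \<Rightarrow> real^'n \<Rightarrow> bool" where
  "partial_exists j f x \<longleftrightarrow> (\<lambda>t::real. f (x + t *\<^sub>R axis j 1)) differentiable (at 0)"

definition partial :: "'n::finite \<Rightarrow> (real^'n \<Rightarrow> 'a::real_normed_vector) \<Rightarrow> real^'n \<Rightarrow> 'a" where
  "partial j f x = vector_derivative (\<lambda>t::real. f (x + t *\<^sub>R axis j 1)) (at 0)"

fun iter_partial :: "'n::finite list \<Rightarrow> (real^'n \<Rightarrow> 'a::real_normed_vector) \<Rightarrow> real^'n \<Rightarrow> 'a" where
  "iter_partial [] f = f"
| "iter_partial (j # js) f = partial j (iter_partial js f)"

definition C1_on :: "(real^'n::finite) set \<Rightarrow> (real^'n \<Rightarrow> 'a::real_normed_vector) \<Rightarrow> bool" where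
  "C1_on S f \<longleftrightarrow> continuous_on S f \<and>
     (\<forall>j. (\<forall>x\<in>S. partial_exists j f x) \<and> continuous_on S (partial j f))"

definition smooth_on :: "(real^'n::finite) set \<Rightarrow> (real^'n \<Rightarrow> 'a::real_normed_vector) \<Rightarrow> bool" where
  "smooth_on S f \<longleftrightarrow> (\<forall>js. (\<forall>j. \<forall>x\<in>S. partial_exists j (iter_partial js f) x) \<and>
                              continuous_on S (iter_partial js f))"

definition test_fun :: "(real^'n::finite) set \<Rightarrow> (real^'n \<Rightarrow> 'a::real_normed_vector) \<Rightarrow> bool" where
  "test_fun \<Omega> f \<longleftrightarrow> smooth_on \<Omega> f \<and> compact (closure {x. f x \<noteq> 0}) \<and> closure {x. f x \<noteq> 0} \<subseteq> \<Omega>"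

definition loc_integrable :: "(real^'n::finite) set \<Rightarrow> (real^'n \<Rightarrow> real) \<Rightarrow> bool" where
  "loc_integrable \<Omega> f \<longleftrightarrow> (\<forall>K. compact K \<and> K \<subseteq> \<Omega> \<longrightarrow> set_integrable lebesgue K f)"

text \<open>Horizontal gradient sigma * grad f (sigma :: l x N matrix, rows indexed by 'l).\<close>
definition hgrad :: "(real^'n::finite \<Rightarrow> real^'n^'l::finite) \<Rightarrow> (real^'n \<Rightarrow> 'a::real_normed_vector) \<Rightarrow> real^'n \<Rightarrow> 'l \<Rightarrow> 'a" where
  "hgrad \<sigma> f x i = (\<Sum>j\<in>UNIV. (\<sigma> x $ i $ j) *\<^sub>R partial j f x)"

text \<open>The scalar (\<nabla>_L f) . Z (no conjugation; Z is real).\<close>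
definition hdotZ :: "(real^'n::finite \<Rightarrow> real^'n^'l::finite) \<Rightarrow> (real^'n \<Rightarrow> real^'l) \<Rightarrow> (real^'n \<Rightarrow> 'a::real_normed_vector) \<Rightarrow> real^'n \<Rightarrow> 'a" where
  "hdotZ \<sigma> Z f x = (\<Sum>i\<in>UNIV. (Z x $ i) *\<^sub>R hgrad \<sigma> f x i)"

definition Cp :: "real \<Rightarrow> complex \<Rightarrow> complex \<Rightarrow> real" where
  "Cp p \<xi> \<eta> = norm \<xi> powr p - norm (\<xi> - \<eta>) powr p
       - p * norm (\<xi> - \<eta>) powr (p - 2) * Re ((\<xi> - \<eta>) * cnj \<eta>)"

end

theory Submission
  imports Defs "HOL-Computational_Algebra.Polynomial"
begin
definition smooth1 :: "(nat \<Rightarrow> real \<Rightarrow> real) \<Rightarrow> bool" where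
  "smooth1 G \<longleftrightarrow> (\<forall>k x. (G k has_real_derivative G (Suc k) x) (at x))"

lemma Suc_choose': "Suc n choose k = (n choose k) + (if k = 0 then 0 else (n choose (k-1)))"
  by (cases k) simp_all

lemma smooth1_mult:
  assumes G: "smooth1 G" and H: "smooth1 H"
  shows "smooth1 (\<lambda>k t. \<Sum>i=0..k. real (k choose i) * G i t * H (k - i) t)"
  unfolding smooth1_def
proof (intro allI)
  fix n x
  have dG: "\<And>i. (G i has_real_derivative G (Suc i) x) (at x)" using G by (auto simp: smooth1_def)
  have dH: "\<And>i. (H i has_real_derivative H (Suc i) x) (at x)" using H by (auto simp: smooth1_def)
  have sumeq: "(\<Sum>i = 0..n. real (n choose i) * (G (Suc i) x * H (n - i) x + G i x * H (Suc (n - i)) x)) =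
      (\<Sum>i = 0..Suc n. real (Suc n choose i) * G i x * H (Suc n - i) x)"
  proof -
    have A: "(\<Sum>i = 0..Suc n. real (Suc n choose i) * G i x * H (Suc n - i) x) =
      (\<Sum>i = 0..Suc n. real (n choose i) * G i x * H (Suc n - i) x) +
      (\<Sum>i = 0..Suc n. (if i = 0 then 0 else real (n choose (i - 1))) * G i x * H (Suc n - i) x)"
      unfolding sum.distrib[symmetric] by (rule sum.cong) (auto simp: Suc_choose' algebra_simps)
    have B: "(\<Sum>i = 0..Suc n. real (n choose i) * G i x * H (Suc n - i) x) =
        (\<Sum>i = 0..n. real (n choose i) * G i x * H (Suc (n - i)) x)"
      by (simp add: Suc_diff_le)
    have C: "(\<Sum>i = 0..Suc n. (if i = 0 then 0 else real (n choose (i - 1))) * G i x * H (Suc n - i) x)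
        = (\<Sum>i = 0..n. real (n choose i) * G (Suc i) x * H (n - i) x)"
      by (subst sum.atLeast0_atMost_Suc_shift) simp
    show ?thesis using A B C by (simp add: algebra_simps sum.distrib)
  qed
  have "((\<lambda>t. \<Sum>i=0..n. real (n choose i) * G i t * H (n - i) t) has_real_derivative
      (\<Sum>i = 0..n. real (n choose i) * (G (Suc i) x * H (n - i) x + G i x * H (Suc (n - i)) x))) (at x)"
    apply (rule DERIV_sum)
    apply (subst mult.assoc)
    apply (rule DERIV_cmult)
    apply (rule DERIV_mult[OF dG dH, THEN DERIV_cong])
    apply (simp add: Suc_diff_le algebra_simps)
    done
  then show "((\<lambda>t. \<Sum>i=0..n. real (n choose i) * G i t * H (n - i) t) has_real_derivative
      (\<Sum>i = 0..Suc n. real (Suc n choose i) * G i x * H (Suc n - i) x)) (at x)"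
    using sumeq by simp
qed

lemma smooth1_reflect:
  assumes G: "smooth1 G"
  shows "smooth1 (\<lambda>k t. (-1)^k * G k (a - t))"
  unfolding smooth1_def
proof (intro allI)
  fix k x
  have "((\<lambda>t. G k (a - t)) has_real_derivative G (Suc k) (a - x) * (-1)) (at x)"
    using G unfolding smooth1_def
    by (intro DERIV_chain2[where f="G k"]) (auto intro!: derivative_eq_intros)
  then show "((\<lambda>t. (-1)^k * G k (a - t)) has_real_derivative (-1)^Suc k * G (Suc k) (a - x)) (at x)"
    by (auto intro!: derivative_eq_intros)
qed

primrec Pk :: "nat \<Rightarrow> real poly" where
  "Pk 0 = 1"
| "Pk (Suc k) = [:0,0,1:] * (Pk k - pderiv (Pk k))"

definition Fb :: "nat \<Rightarrow> real \<Rightarrow> real" where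
  "Fb k t = (if t > 0 then poly (Pk k) (1/t) * exp (-1/t) else 0)"

lemma poly_exp_lim: fixes Q :: "real poly" shows "((\<lambda>s. poly Q s * exp (- s)) \<longlongrightarrow> 0) at_top"
proof -
  have "((\<lambda>s. \<Sum>i\<le>degree Q. coeff Q i * (s ^ i / exp s)) \<longlongrightarrow> (\<Sum>i\<le>degree Q. coeff Q i * 0)) at_top"
    by (intro tendsto_sum tendsto_mult tendsto_const tendsto_power_div_exp_0)
  moreover have "poly Q s * exp (- s) = (\<Sum>i\<le>degree Q. coeff Q i * (s ^ i / exp s))" for s
    by (simp add: poly_altdef exp_minus divide_inverse sum_distrib_right mult.assoc)
  ultimately show ?thesis by simp
qed

lemma Fb_deriv_pos:
  assumes "x > 0"
  shows "(Fb k has_real_derivative Fb (Suc k) x) (at x)"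
proof -
  have "((\<lambda>t. poly (Pk k) (1/t) * exp (-1/t)) has_real_derivative
      poly (pderiv (Pk k)) (1/x) * (- 1 / x^2) * exp (-1/x) + poly (Pk k) (1/x) * (exp (-1/x) * (1/x^2))) (at x)"
    using assms
    by (auto intro!: derivative_eq_intros DERIV_chain2[where f="poly (Pk k)", OF poly_DERIV]
        simp: field_simps power2_eq_square)
  moreover have "poly (pderiv (Pk k)) (1/x) * (- 1 / x^2) * exp (-1/x) + poly (Pk k) (1/x) * (exp (-1/x) * (1/x^2))
      = Fb (Suc k) x"
    using assms by (simp add: Fb_def algebra_simps power2_eq_square divide_simps)
  ultimately have "((\<lambda>t. poly (Pk k) (1/t) * exp (-1/t)) has_real_derivative Fb (Suc k) x) (at x)"
    by simp
  then show ?thesis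
    by (rule has_field_derivative_transform_within_open[where S="{0<..}"]) (use assms in \<open>auto simp: Fb_def\<close>)
qed

lemma Fb_deriv_neg:
  assumes "x < 0"
  shows "(Fb k has_real_derivative Fb (Suc k) x) (at x)"
proof -
  have "((\<lambda>t. 0) has_real_derivative Fb (Suc k) x) (at x)" using assms by (simp add: Fb_def)
  then show ?thesis
    by (rule has_field_derivative_transform_within_open[where S="{..<0}"]) (use assms in \<open>auto simp: Fb_def\<close>)
qed

lemma Fb_deriv_0: "(Fb k has_real_derivative Fb (Suc k) 0) (at 0)"
proof -
  have r: "((\<lambda>y. (Fb k y - Fb k 0) / (y - 0)) \<longlongrightarrow> 0) (at_right 0)"
  proof -
    have "((\<lambda>y. poly ([:0,1:] * Pk k) (inverse y) * exp (- inverse y)) \<longlongrightarrow> 0) (at_right 0)"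
      by (rule filterlim_compose[OF poly_exp_lim filterlim_inverse_at_top_right])
    moreover have "\<forall>\<^sub>F y in at_right 0. poly ([:0,1:] * Pk k) (inverse y) * exp (- inverse y) = (Fb k y - Fb k 0) / (y - 0)"
      using eventually_at_right_less[of "0::real"]
      by eventually_elim (auto simp: Fb_def field_simps)
    ultimately show ?thesis by (rule Lim_transform_eventually)
  qed
  have l: "((\<lambda>y. (Fb k y - Fb k 0) / (y - 0)) \<longlongrightarrow> 0) (at_left 0)"
  proof -
    have "\<forall>\<^sub>F y in at_left 0. 0 = (Fb k y - Fb k 0) / (y - 0)"
      using eventually_at_left_real[where a="0::real" and b="-1", OF neg_less_0_iff_less[THEN iffD2, OF zero_less_one]]
      by eventually_elim (auto simp: Fb_def field_simps)
    then show ?thesis by (rule Lim_transform_eventually[OF tendsto_const])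
  qed
  have "((\<lambda>y. (Fb k y - Fb k 0) / (y - 0)) \<longlongrightarrow> 0) (at 0)"
    using l r by (rule filterlim_split_at)
  then show ?thesis by (simp add: has_field_derivative_iff Fb_def)
qed

lemma smooth1_Fb: "smooth1 Fb"
  unfolding smooth1_def
proof (intro allI)
  fix k and x :: real
  show "(Fb k has_real_derivative Fb (Suc k) x) (at x)"
    using Fb_deriv_pos Fb_deriv_neg Fb_deriv_0 by (cases x "0::real" rule: linorder_cases) auto
qed

definition Hb :: "real \<Rightarrow> nat \<Rightarrow> real \<Rightarrow> real" where
  "Hb a k t = (\<Sum>i=0..k. real (k choose i) * Fb i t * ((-1)^(k - i) * Fb (k - i) (a - t)))"

lemma smooth1_Hb: "smooth1 (Hb a)"
proof -
  have "smooth1 (\<lambda>k t. (-1)^k * Fb k (a - t))" by (rule smooth1_reflect[OF smooth1_Fb])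
  from smooth1_mult[OF smooth1_Fb this] show ?thesis unfolding Hb_def[abs_def] .
qed

lemma Hb0: "Hb a 0 t = Fb 0 t * Fb 0 (a - t)"
  by (simp add: Hb_def)

lemma Fb0: "Fb 0 t = (if t > 0 then exp (-1/t) else 0)"
  by (simp add: Fb_def)

lemma Hb0_nonneg: "Hb a 0 t \<ge> 0"
  by (simp add: Hb0 Fb0)

lemma Hb0_zero: "\<not> (0 < t \<and> t < a) \<Longrightarrow> Hb a 0 t = 0"
  by (auto simp: Hb0 Fb0)

lemma Hb0_lower:
  assumes "a > 0" "a/4 \<le> t" "t \<le> 3*a/4"
  shows "Hb a 0 t \<ge> exp (-8/a)"
proof -
  have t: "t > 0" "a - t > 0" using assms by auto
  have "1/t \<le> 4/a" using assms t by (simp add: field_simps)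
  moreover have "1/(a-t) \<le> 4/a" using assms t by (simp add: field_simps)
  ultimately have "-8/a \<le> -1/t + -1/(a-t)" by (simp add: field_simps)
  then have "exp (-8/a) \<le> exp (-1/t + -1/(a-t))" by simp
  also have "\<dots> = Hb a 0 t" using t by (simp add: Hb0 Fb0 exp_add[symmetric])
  finally show ?thesis .
qed

lemma smooth1_cont: "smooth1 G \<Longrightarrow> continuous_on UNIV (G k)"
  unfolding smooth1_def
  by (meson DERIV_isCont continuous_at_imp_continuous_on)

lemma partial_from_deriv:
  assumes "((\<lambda>t. f (x + t *\<^sub>R axis j 1)) has_vector_derivative D) (at 0)"
  shows "partial_exists j f x" "partial j f x = D"
  using assms unfolding partial_exists_def partial_def
  by (auto intro: differentiableI_vector vector_derivative_at)

lemma partial_deriv: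
  assumes "partial_exists j f x"
  shows "((\<lambda>t. f (x + t *\<^sub>R axis j 1)) has_vector_derivative partial j f x) (at 0)"
  using assms unfolding partial_exists_def partial_def
  by (simp add: vector_derivative_works)

definition kprod :: "(nat \<Rightarrow> real \<Rightarrow> real) \<Rightarrow> ('n::finite \<Rightarrow> nat) \<Rightarrow> real^'n \<Rightarrow> real" where
  "kprod G c z = (\<Prod>i\<in>UNIV. G (c i) (z $ i))"

lemma kprod_deriv:
  assumes G: "smooth1 G"
  shows "((\<lambda>t. kprod G c (z + t *\<^sub>R axis j 1)) has_field_derivative kprod G (c(j := Suc (c j))) z) (at 0)"
proof -
  let ?R = "(\<Prod>i\<in>UNIV-{j}. G (c i) (z$i))"
  have eq: "kprod G c (z + t *\<^sub>R axis j 1) = G (c j) (z$j + t) * ?R" for t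
    unfolding kprod_def by (subst prod.remove[of UNIV j]) (auto simp: axis_def intro!: prod.cong)
  have eq2: "kprod G (c(j := Suc (c j))) z = G (Suc (c j)) (z$j) * ?R"
    unfolding kprod_def by (subst prod.remove[of UNIV j]) (auto intro!: prod.cong)
  have "(G (c j) has_real_derivative G (Suc (c j)) (z$j)) (at (0 + z$j))"
    using G by (simp add: smooth1_def)
  then have "((\<lambda>t. G (c j) (t + z$j)) has_real_derivative G (Suc (c j)) (z$j)) (at 0)"
    by (rule DERIV_shift[THEN iffD1])
  then have "((\<lambda>t. G (c j) (z$j + t) * ?R) has_real_derivative G (Suc (c j)) (z$j) * ?R) (at 0)"
    by (auto intro!: DERIV_cmult_right simp: add.commute)
  then show ?thesis unfolding eq eq2 .
qed

lemma kprod_cont: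
  assumes G: "smooth1 G"
  shows "continuous_on UNIV (kprod G c)"
  unfolding kprod_def
  by (intro continuous_on_prod continuous_on_compose2[OF smooth1_cont[OF G]] continuous_intros) auto

definition convY :: "(real^'n::finite \<Rightarrow> real) \<Rightarrow> real^'n \<Rightarrow> real^'n \<Rightarrow> (real^'n \<Rightarrow> real) \<Rightarrow> real^'n \<Rightarrow> real" where
  "convY f0 lo hi K x = integral (cbox lo hi) (\<lambda>y. f0 y * K (x - y))"

lemma convY_partial:
  fixes f0 K K' :: "real^'n::finite \<Rightarrow> real"
  assumes f0: "continuous_on UNIV f0" and K: "continuous_on UNIV K" and K': "continuous_on UNIV K'"
    and dK: "\<And>z. ((\<lambda>t. K (z + t *\<^sub>R axis j 1)) has_field_derivative K' z) (at 0)"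
  shows "((\<lambda>t. convY f0 lo hi K (x + t *\<^sub>R axis j 1)) has_field_derivative convY f0 lo hi K' x) (at 0)"
proof -
  define e where "e = (axis j 1 :: real^'n)"
  have d: "((\<lambda>t. f0 y * K (x + t *\<^sub>R e - y)) has_field_derivative f0 y * K' (x + s *\<^sub>R e - y)) (at s within UNIV)" for s y
  proof -
    have "((\<lambda>t. K ((x + s *\<^sub>R e - y) + t *\<^sub>R e)) has_field_derivative K' (x + s *\<^sub>R e - y)) (at (s + - s))"
      using dK[of "x + s *\<^sub>R e - y"] by (simp add: e_def)
    then have "((\<lambda>t. K ((x + s *\<^sub>R e - y) + (t + - s) *\<^sub>R e)) has_field_derivative K' (x + s *\<^sub>R e - y)) (at s)"
      by (rule DERIV_shift[THEN iffD1])
    moreover have "(\<lambda>t. K ((x + s *\<^sub>R e - y) + (t + - s) *\<^sub>R e)) = (\<lambda>t. K (x + t *\<^sub>R e - y))"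
      by (rule ext) (simp add: algebra_simps)
    ultimately have "((\<lambda>t. K (x + t *\<^sub>R e - y)) has_field_derivative K' (x + s *\<^sub>R e - y)) (at s)"
      by simp
    then show ?thesis by (auto intro!: DERIV_cmult)
  qed
  have c1: "continuous_on UNIV (\<lambda>y. f0 y * K' (x + t *\<^sub>R e - y))" for t
    by (intro continuous_intros continuous_on_compose2[OF K'] continuous_on_subset[OF f0]) auto
  have c2: "continuous_on (UNIV \<times> cbox lo hi) (\<lambda>(t, y). f0 y * K' (x + t *\<^sub>R e - y))"
    unfolding split_beta
    by (intro continuous_intros continuous_on_compose2[OF K'] continuous_on_compose2[OF f0]) auto
  have c3: "continuous_on UNIV (\<lambda>y. f0 y * K (x + t *\<^sub>R e - y))" for t
    by (intro continuous_intros continuous_on_compose2[OF K] continuous_on_subset[OF f0]) auto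
  have "((\<lambda>t. integral (cbox lo hi) (\<lambda>y. f0 y * K (x + t *\<^sub>R e - y))) has_field_derivative
      integral (cbox lo hi) (\<lambda>y. f0 y * K' (x + 0 *\<^sub>R e - y))) (at 0 within UNIV)"
    by (rule leibniz_rule_field_derivative[where fx="\<lambda>t y. f0 y * K' (x + t *\<^sub>R e - y)", OF d _ c2])
       (auto intro!: integrable_continuous continuous_on_subset[OF c3])
  then show ?thesis by (simp add: convY_def e_def)
qed

lemma convY_cont:
  fixes f0 K :: "real^'n::finite \<Rightarrow> real"
  assumes f0: "continuous_on UNIV f0" and K: "continuous_on UNIV K"
  shows "continuous_on S (convY f0 lo hi K)"
proof -
  have c2: "continuous_on (UNIV \<times> cbox lo hi) (\<lambda>(x, y). f0 y * K (x - y))"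
    unfolding split_beta
    by (intro continuous_intros continuous_on_compose2[OF K] continuous_on_compose2[OF f0]) auto
  have "continuous_on UNIV (convY f0 lo hi K)"
    unfolding convY_def[abs_def] by (rule integral_continuous_on_param[OF c2])
  then show ?thesis by (rule continuous_on_subset) auto
qed

lemma convY_iter:
  fixes f0 :: "real^'n::finite \<Rightarrow> real" and Kf :: "('n \<Rightarrow> nat) \<Rightarrow> real^'n \<Rightarrow> real"
  assumes f0: "continuous_on UNIV f0" and Kc: "\<And>c. continuous_on UNIV (Kf c)"
    and dK: "\<And>c j z. ((\<lambda>t. Kf c (z + t *\<^sub>R axis j 1)) has_field_derivative Kf (c(j := Suc (c j))) z) (at 0)"
  shows "iter_partial js (convY f0 lo hi (Kf c)) = convY f0 lo hi (Kf (\<lambda>i. c i + count_list js i))"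
proof (induction js)
  case Nil
  then show ?case by simp
next
  case (Cons j js)
  define c' where "c' = (\<lambda>i. c i + count_list js i)"
  have A: "partial j (convY f0 lo hi (Kf c')) x = convY f0 lo hi (Kf (c'(j := Suc (c' j)))) x" for x
    using convY_partial[OF f0 Kc Kc dK, where j=j and x=x]
    by (intro partial_from_deriv(2)) (simp add: has_real_derivative_iff_has_vector_derivative)
  have B: "c'(j := Suc (c' j)) = (\<lambda>i. c i + count_list (j # js) i)"
    by (auto simp: c'_def)
  have C: "iter_partial (j#js) (convY f0 lo hi (Kf c)) = partial j (convY f0 lo hi (Kf c'))"
    using Cons.IH by (simp add: c'_def)
  show ?case unfolding C using A B by (simp add: fun_eq_iff)
qed

lemma convY_smooth:
  fixes f0 :: "real^'n::finite \<Rightarrow> real" and Kf :: "('n \<Rightarrow> nat) \<Rightarrow> real^'n \<Rightarrow> real"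
  assumes f0: "continuous_on UNIV f0" and Kc: "\<And>c. continuous_on UNIV (Kf c)"
    and dK: "\<And>c j z. ((\<lambda>t. Kf c (z + t *\<^sub>R axis j 1)) has_field_derivative Kf (c(j := Suc (c j))) z) (at 0)"
  shows "smooth_on S (convY f0 lo hi (Kf c))"
  unfolding smooth_on_def
proof (intro allI conjI ballI)
  fix js j x
  show "partial_exists j (iter_partial js (convY f0 lo hi (Kf c))) x"
    unfolding convY_iter[OF f0 Kc dK]
    using convY_partial[OF f0 Kc Kc dK, where j=j and x=x]
    by (intro partial_from_deriv(1)) (simp add: has_real_derivative_iff_has_vector_derivative)
  show "continuous_on S (iter_partial js (convY f0 lo hi (Kf c)))"
    unfolding convY_iter[OF f0 Kc dK] by (rule convY_cont[OF f0 Kc])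
qed

definition Ia :: "real \<Rightarrow> ('n::finite) itself \<Rightarrow> real" where
  "Ia a _ = integral (cbox 0 (a *\<^sub>R (1::real^'n))) (kprod (Hb a) (\<lambda>_::'n. 0))"

definition kn :: "real \<Rightarrow> ('n::finite \<Rightarrow> nat) \<Rightarrow> real^'n \<Rightarrow> real" where
  "kn a c z = kprod (Hb a) c z * inverse (Ia a TYPE('n))"

lemma kprod0_nonneg: "kprod (Hb a) (\<lambda>_. 0) z \<ge> 0"
  unfolding kprod_def by (intro prod_nonneg) (auto intro: Hb0_nonneg)

lemma kprod0_zero: "z \<notin> cbox 0 (a *\<^sub>R (1::real^'n::finite)) \<Longrightarrow> kprod (Hb a) (\<lambda>_. 0) z = 0"
proof -
  assume "z \<notin> cbox 0 (a *\<^sub>R (1::real^'n::finite))"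
  then have "\<exists>i. \<not> (0 \<le> z$i \<and> z$i \<le> a)" by (simp add: mem_box_cart)
  then obtain i where "\<not> (0 \<le> z$i \<and> z$i \<le> a)" by blast
  then have "\<not> (0 < z$i \<and> z$i < a)" by auto
  then have "Hb a 0 (z$i) = 0" by (rule Hb0_zero)
  then show ?thesis unfolding kprod_def by (intro prod_zero) auto
qed

lemma Ia_pos:
  assumes a: "a > 0"
  shows "Ia a TYPE('n::finite) > 0"
proof -
  let ?k = "kprod (Hb a) (\<lambda>_::'n. 0)"
  let ?S = "cbox ((a/4) *\<^sub>R (1::real^'n)) ((3*a/4) *\<^sub>R 1)"
  let ?T = "cbox 0 (a *\<^sub>R (1::real^'n))"
  have kc: "continuous_on UNIV ?k" by (rule kprod_cont[OF smooth1_Hb])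
  have ST: "?S \<subseteq> ?T" using a by (auto simp: mem_box_cart) (smt (verit))+
  have lb: "?k z \<ge> exp (-8/a) ^ CARD('n)" if "z \<in> ?S" for z
  proof -
    have "(\<Prod>i\<in>(UNIV::'n set). exp (-8/a)) \<le> ?k z"
      unfolding kprod_def
    proof (intro prod_mono conjI)
      fix i
      have "a/4 \<le> z$i" "z$i \<le> 3*a/4" using that by (auto simp: mem_box_cart)
      then show "exp (-8/a) \<le> Hb a 0 (z$i)" using a by (intro Hb0_lower) auto
    qed auto
    then show ?thesis by simp
  qed
  have "integral ?S (\<lambda>z. exp (-8/a) ^ CARD('n)) \<le> integral ?S ?k"
    by (intro integral_le integrable_continuous continuous_on_subset[OF kc] lb) auto
  also have "\<dots> \<le> integral ?T ?k"
    by (intro integral_subset_le ST integrable_continuous continuous_on_subset[OF kc] ballI kprod0_nonneg) auto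
  finally have "integral ?S (\<lambda>z. exp (-8/a) ^ CARD('n)) \<le> Ia a TYPE('n)" by (simp add: Ia_def)
  moreover have "integral ?S (\<lambda>z. exp (-8/a) ^ CARD('n)) > 0"
  proof -
    have "(a/2) *\<^sub>R 1 \<in> ?S" using a by (simp add: mem_box_cart)
    then have ne: "?S \<noteq> {}" by blast
    have "measure lborel ?S = (\<Prod>i\<in>(UNIV::'n set). a/2)"
      using content_cbox_cart[OF ne] by simp
    then have "measure lborel ?S > 0" using a by (simp add: prod_pos)
    then show ?thesis by simp
  qed
  ultimately show ?thesis by linarith
qed

lemma kn_cont: "continuous_on UNIV (kn a c)"
  unfolding kn_def[abs_def] by (intro continuous_intros kprod_cont[OF smooth1_Hb])

lemma kn_deriv: "((\<lambda>t. kn a c (z + t *\<^sub>R axis j 1)) has_field_derivative kn a (c(j := Suc (c j))) z) (at 0)"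
  unfolding kn_def by (intro DERIV_cmult_right kprod_deriv[OF smooth1_Hb])

lemma kn0_nonneg: fixes z :: "real^'n::finite" shows "a > 0 \<Longrightarrow> kn a (\<lambda>_. 0) z \<ge> 0"
  unfolding kn_def using Ia_pos[of a, where 'n='n] kprod0_nonneg[of a z] by simp

lemma kn0_zero: "z \<notin> cbox 0 (a *\<^sub>R (1::real^'n::finite)) \<Longrightarrow> kn a (\<lambda>_. 0) z = 0"
  unfolding kn_def using kprod0_zero[of z a] by simp

lemma kn0_int: "a > 0 \<Longrightarrow> integral (cbox 0 (a *\<^sub>R (1::real^'n::finite))) (kn a (\<lambda>_. 0)) = 1"
  unfolding kn_def using Ia_pos[of a, where 'n='n]
  by (simp add: Ia_def)

definition convZ :: "(real^'n::finite \<Rightarrow> real) \<Rightarrow> real \<Rightarrow> real^'n \<Rightarrow> real" where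
  "convZ g a x = integral (cbox 0 (a *\<^sub>R 1)) (\<lambda>z. g (x - z) * kn a (\<lambda>_. 0) z)"

lemma convY_convZ:
  fixes f0 :: "real^'n::finite \<Rightarrow> real"
  assumes f0: "continuous_on UNIV f0" and z: "\<And>y. y \<notin> cbox lo hi \<Longrightarrow> f0 y = 0"
  shows "convY f0 lo hi (kn a (\<lambda>_. 0)) x = convZ f0 a x"
proof -
  define h where "h y = f0 y * kn a (\<lambda>_. 0) (x - y)" for y
  have hc: "continuous_on UNIV h" unfolding h_def
    by (intro continuous_intros continuous_on_compose2[OF kn_cont] f0) auto
  have "(h has_integral integral (cbox lo hi) h) (cbox lo hi)"
    by (intro integrable_integral integrable_continuous continuous_on_subset[OF hc]) auto
  from has_integral_affinity[OF this, of "-1" x]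
  have "((\<lambda>z. h (x - z)) has_integral integral (cbox lo hi) h) ((\<lambda>z. - z + x) ` cbox lo hi)"
    by simp
  then have 1: "((\<lambda>z. h (x - z)) has_integral integral (cbox lo hi) h) UNIV"
  proof (rule has_integral_on_superset)
    fix z assume "z \<notin> (\<lambda>z. - z + x) ` cbox lo hi"
    then have "x - z \<notin> cbox lo hi"
      by (metis (no_types, lifting) add.commute diff_add_cancel image_eqI minus_diff_eq uminus_add_conv_diff)
    then show "h (x - z) = 0" by (simp add: h_def z)
  qed auto
  have kc: "continuous_on UNIV (\<lambda>z. f0 (x - z) * kn a (\<lambda>_. 0) z)"
    by (intro continuous_intros continuous_on_compose2[OF f0] kn_cont) auto
  have "((\<lambda>z. f0 (x - z) * kn a (\<lambda>_. 0) z) has_integral convZ f0 a x) (cbox 0 (a *\<^sub>R 1))"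
    unfolding convZ_def
    by (intro integrable_integral integrable_continuous continuous_on_subset[OF kc]) auto
  then have 2: "((\<lambda>z. f0 (x - z) * kn a (\<lambda>_. 0) z) has_integral convZ f0 a x) UNIV"
    by (rule has_integral_on_superset) (auto simp: kn0_zero)
  have "(\<lambda>z. h (x - z)) = (\<lambda>z. f0 (x - z) * kn a (\<lambda>_. 0) z)"
    by (simp add: h_def)
  with 1 2 have "integral (cbox lo hi) h = convZ f0 a x"
    using has_integral_unique by metis
  then show ?thesis by (simp add: convY_def h_def[abs_def])
qed

lemma convZ_deriv:
  fixes f0 D :: "real^'n::finite \<Rightarrow> real"
  assumes f0: "continuous_on UNIV f0" and D: "continuous_on UNIV D"
    and df: "\<And>w. ((\<lambda>t. f0 (w + t *\<^sub>R axis j 1)) has_field_derivative D w) (at 0)"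
  shows "((\<lambda>t. convZ f0 a (x + t *\<^sub>R axis j 1)) has_field_derivative convZ D a x) (at 0)"
proof -
  define e where "e = (axis j 1 :: real^'n)"
  define k where "k = (kn a (\<lambda>_. 0) :: real^'n \<Rightarrow> real)"
  have kc: "continuous_on UNIV k" unfolding k_def by (rule kn_cont)
  have d: "((\<lambda>t. f0 (x + t *\<^sub>R e - z) * k z) has_field_derivative D (x + s *\<^sub>R e - z) * k z) (at s within UNIV)" for s z
  proof -
    have "((\<lambda>t. f0 ((x + s *\<^sub>R e - z) + t *\<^sub>R e)) has_field_derivative D (x + s *\<^sub>R e - z)) (at (s + - s))"
      using df[of "x + s *\<^sub>R e - z"] by (simp add: e_def)
    then have "((\<lambda>t. f0 ((x + s *\<^sub>R e - z) + (t + - s) *\<^sub>R e)) has_field_derivative D (x + s *\<^sub>R e - z)) (at s)"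
      by (rule DERIV_shift[THEN iffD1])
    moreover have "(\<lambda>t. f0 ((x + s *\<^sub>R e - z) + (t + - s) *\<^sub>R e)) = (\<lambda>t. f0 (x + t *\<^sub>R e - z))"
      by (rule ext) (simp add: algebra_simps)
    ultimately have "((\<lambda>t. f0 (x + t *\<^sub>R e - z)) has_field_derivative D (x + s *\<^sub>R e - z)) (at s)"
      by simp
    then show ?thesis by (auto intro!: DERIV_cmult_right)
  qed
  have c2: "continuous_on (UNIV \<times> cbox 0 (a *\<^sub>R 1)) (\<lambda>(t, z). D (x + t *\<^sub>R e - z) * k z)"
    unfolding split_beta
    by (intro continuous_intros continuous_on_compose2[OF D] continuous_on_compose2[OF kc]) auto
  have c3: "continuous_on UNIV (\<lambda>z. f0 (x + t *\<^sub>R e - z) * k z)" for t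
    by (intro continuous_intros continuous_on_compose2[OF f0] kc) auto
  have "((\<lambda>t. integral (cbox 0 (a *\<^sub>R 1)) (\<lambda>z. f0 (x + t *\<^sub>R e - z) * k z)) has_field_derivative
      integral (cbox 0 (a *\<^sub>R 1)) (\<lambda>z. D (x + 0 *\<^sub>R e - z) * k z)) (at 0 within UNIV)"
    by (rule leibniz_rule_field_derivative[where fx="\<lambda>t z. D (x + t *\<^sub>R e - z) * k z", OF d _ c2])
       (auto intro!: integrable_continuous continuous_on_subset[OF c3])
  then show ?thesis by (simp add: convZ_def e_def k_def)
qed

lemma convZ_bound:
  fixes g :: "real^'n::finite \<Rightarrow> real"
  assumes g: "continuous_on UNIV g" and B: "\<And>y. \<bar>g y\<bar> \<le> B" and a: "a > 0"
  shows "\<bar>convZ g a x\<bar> \<le> B"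
proof -
  have kc: "continuous_on UNIV (\<lambda>z. g (x - z) * kn a (\<lambda>_. 0) z)"
    by (intro continuous_intros continuous_on_compose2[OF g] kn_cont) auto
  have "norm (convZ g a x) \<le> integral (cbox 0 (a *\<^sub>R 1)) (\<lambda>z::real^'n. B * kn a (\<lambda>_. 0) z)"
    unfolding convZ_def
  proof (rule Henstock_Kurzweil_Integration.integral_norm_bound_integral)
    fix z :: "real^'n"
    show "norm (g (x - z) * kn a (\<lambda>_. 0) z) \<le> B * kn a (\<lambda>_. 0) z"
      using B[of "x - z"] kn0_nonneg[OF a, of z]
      by (simp add: abs_mult mult_right_mono)
  qed (auto intro!: integrable_continuous continuous_on_subset[OF kc] continuous_intros continuous_on_subset[OF kn_cont])
  also have "\<dots> = B" using kn0_int[OF a, where 'n='n] by simp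
  finally show ?thesis by simp
qed

lemma convZ_zero:
  fixes g :: "real^'n::finite \<Rightarrow> real"
  assumes "\<And>z. z \<in> cbox 0 (a *\<^sub>R 1) \<Longrightarrow> g (x - z) = 0"
  shows "convZ g a x = 0"
  unfolding convZ_def using assms by (subst integral_cong[where g="\<lambda>_. 0"]) auto

lemma norm_cbox_bound:
  assumes "z \<in> cbox 0 (a *\<^sub>R (1::real^'n::finite))"
  shows "norm z \<le> real CARD('n) * a"
proof -
  have "norm z \<le> (\<Sum>i\<in>UNIV. \<bar>z$i\<bar>)" by (rule norm_le_l1_cart)
  also have "\<dots> \<le> (\<Sum>i\<in>(UNIV::'n set). a)"
    using assms by (intro sum_mono) (auto simp: mem_box_cart)
  finally show ?thesis by simp
qed

lemma convZ_tendsto: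
  fixes g :: "real^'n::finite \<Rightarrow> real"
  assumes g: "continuous_on UNIV g" and am: "am \<longlonglongrightarrow> 0" and apos: "\<And>m. am m > 0"
  shows "(\<lambda>m. convZ g (am m) x) \<longlonglongrightarrow> g x"
proof (rule LIMSEQ_I)
  fix r :: real assume r: "r > 0"
  have "isCont g x" using g by (simp add: continuous_on_eq_continuous_at)
  then obtain d where d: "d > 0" "\<And>y. dist y x < d \<Longrightarrow> dist (g y) (g x) < r/2"
    using r unfolding continuous_at_eps_delta by (metis half_gt_zero)
  have "d / (real CARD('n)) > 0" using d by simp
  then obtain N where N: "\<And>m. m \<ge> N \<Longrightarrow> norm (am m - 0) < d / real CARD('n)"
    using LIMSEQ_D[OF am] by metis
  show "\<exists>N. \<forall>m\<ge>N. norm (convZ g (am m) x - g x) < r"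
  proof (intro exI allI impI)
    fix m assume m: "m \<ge> N"
    define a where "a = am m"
    have a: "a > 0" using apos by (simp add: a_def)
    have aN: "real CARD('n) * a < d" using N[OF m] a by (simp add: a_def field_simps)
    define k where "k = (kn a (\<lambda>_. 0) :: real^'n \<Rightarrow> real)"
    have kc: "continuous_on UNIV k" unfolding k_def by (rule kn_cont)
    have c1: "continuous_on UNIV (\<lambda>z. g (x - z) * k z)"
      by (intro continuous_intros continuous_on_compose2[OF g] kc) auto
    have "convZ g a x - g x = integral (cbox 0 (a *\<^sub>R 1)) (\<lambda>z. g (x - z) * k z) - integral (cbox 0 (a *\<^sub>R 1)) (\<lambda>z. g x * k z)"
      using kn0_int[OF a, where 'n='n] by (simp add: convZ_def k_def)
    also have "\<dots> = integral (cbox 0 (a *\<^sub>R 1)) (\<lambda>z. (g (x - z) - g x) * k z)"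
      by (subst integral_diff[symmetric])
         (auto intro!: integrable_continuous continuous_on_subset[OF c1] continuous_intros continuous_on_subset[OF kc] continuous_on_compose2[OF g] simp: algebra_simps)
    finally have eq: "convZ g a x - g x = integral (cbox 0 (a *\<^sub>R 1)) (\<lambda>z. (g (x - z) - g x) * k z)" .
    have "norm (integral (cbox 0 (a *\<^sub>R 1)) (\<lambda>z. (g (x - z) - g x) * k z)) \<le> integral (cbox 0 (a *\<^sub>R 1)) (\<lambda>z. (r/2) * k z)"
    proof (rule Henstock_Kurzweil_Integration.integral_norm_bound_integral)
      fix z :: "real^'n" assume z: "z \<in> cbox 0 (a *\<^sub>R 1)"
      have "norm z < d" using norm_cbox_bound[OF z] aN by linarith
      then have "dist (x - z) x < d" by (simp add: dist_norm)
      then have "\<bar>g (x - z) - g x\<bar> \<le> r/2" using d(2) by (simp add: dist_real_def less_imp_le)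
      then show "norm ((g (x - z) - g x) * k z) \<le> r/2 * k z"
        using kn0_nonneg[OF a, of z] mult_right_mono[of "\<bar>g (x - z) - g x\<bar>" "r/2" "k z"]
        by (simp add: abs_mult k_def)
    qed (auto intro!: integrable_continuous continuous_on_subset[OF c1] continuous_intros continuous_on_subset[OF kc] continuous_on_compose2[OF g])
    also have "\<dots> = r/2" using kn0_int[OF a, where 'n='n] by (simp add: k_def)
    finally show "norm (convZ g (am m) x - g x) < r" using eq r by (simp add: a_def)
  qed
qed

lemma norm_axis1: "norm (axis j (1::real) :: real^'n::finite) = 1"
  by simp

lemma deriv_zero_outside:
  fixes f0 :: "real^'n::finite \<Rightarrow> 'b::real_normed_vector"
  assumes K: "closed K" and z: "\<And>y. y \<notin> K \<Longrightarrow> f0 y = 0" and w: "w \<notin> K"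
    and d: "((\<lambda>t. f0 (w + t *\<^sub>R axis j 1)) has_vector_derivative D) (at 0)"
  shows "D = 0"
proof -
  obtain r where r: "r > 0" "ball w r \<subseteq> - K"
    using K w open_contains_ball[of "- K"] by (auto simp: open_Compl)
  have "((\<lambda>t. 0::'b) has_vector_derivative 0) (at (0::real))" by (rule has_vector_derivative_const)
  then have "((\<lambda>t. f0 (w + t *\<^sub>R axis j 1)) has_vector_derivative 0) (at 0)"
  proof (rule has_vector_derivative_transform_within_open[where S="ball 0 r"])
    fix t :: real assume "t \<in> ball 0 r"
    then have "w + t *\<^sub>R axis j 1 \<in> ball w r"
      by (simp add: dist_norm norm_axis1)
    then show "0 = f0 (w + t *\<^sub>R axis j 1)" using r z by auto
  qed (use r in auto)
  with d show ?thesis using vector_derivative_unique_at by blast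
qed

lemma approx_C1:
  fixes f0 :: "real^'n::finite \<Rightarrow> real" and D :: "'n \<Rightarrow> real^'n \<Rightarrow> real"
  assumes f0: "continuous_on UNIV f0" and Dc: "\<And>j. continuous_on UNIV (D j)"
    and df: "\<And>j w. ((\<lambda>t. f0 (w + t *\<^sub>R axis j 1)) has_field_derivative D j w) (at 0)"
    and K0: "compact K0" "K0 \<subseteq> \<Omega>" and z: "\<And>y. y \<notin> K0 \<Longrightarrow> f0 y = 0" and \<Omega>: "open \<Omega>"
  obtains \<psi> :: "nat \<Rightarrow> real^'n \<Rightarrow> real" and K1 B where
    "compact K1" "K1 \<subseteq> \<Omega>"
    "\<And>m. test_fun \<Omega> (\<psi> m)"
    "\<And>m x. x \<notin> K1 \<Longrightarrow> \<psi> m x = 0"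
    "\<And>m j x. x \<notin> K1 \<Longrightarrow> partial j (\<psi> m) x = 0"
    "\<And>m x. \<bar>\<psi> m x\<bar> \<le> B"
    "\<And>m j x. \<bar>partial j (\<psi> m) x\<bar> \<le> B"
    "\<And>x. (\<lambda>m. \<psi> m x) \<longlonglongrightarrow> f0 x"
    "\<And>j x. (\<lambda>m. partial j (\<psi> m) x) \<longlonglongrightarrow> D j x"
    "\<And>m. continuous_on UNIV (\<psi> m)"
    "\<And>m j. continuous_on UNIV (partial j (\<psi> m))"
proof -
  obtain \<delta> where \<delta>: "\<delta> > 0" "(\<Union>x\<in>K0. ball x \<delta>) \<subseteq> \<Omega>"
    using compact_subset_open_imp_ball_epsilon_subset[OF K0(1) \<Omega> K0(2)] by blast
  define K1 where "K1 = {x + y |x y. x \<in> K0 \<and> y \<in> cball 0 (\<delta>/2)}"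
  have K1c: "compact K1" unfolding K1_def by (intro compact_sums K0(1) compact_cball)
  have K1\<Omega>: "K1 \<subseteq> \<Omega>"
  proof
    fix x assume "x \<in> K1"
    then obtain y w where "x = y + w" "y \<in> K0" "w \<in> cball 0 (\<delta>/2)" by (auto simp: K1_def)
    then have "x \<in> ball y \<delta>" using \<delta> by (auto simp: dist_norm)
    with \<open>y \<in> K0\<close> \<delta> show "x \<in> \<Omega>" by blast
  qed
  obtain lo hi :: "real^'n" where box: "K0 \<subseteq> cbox lo hi"
    using bounded_subset_cbox_symmetric[OF compact_imp_bounded[OF K0(1)]] by metis
  have z': "\<And>y. y \<notin> cbox lo hi \<Longrightarrow> f0 y = 0" using box z by blast
  have Dz: "D j w = 0" if "w \<notin> K0" for j w
    using deriv_zero_outside[OF compact_imp_closed[OF K0(1)] z that, where j=j and D="D j w"] df[where j=j and w=w]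
    by (simp add: has_real_derivative_iff_has_vector_derivative)
  define n where "n = real CARD('n)"
  have n: "n \<ge> 1" by (simp add: n_def)
  define am where "am m = \<delta> / (2 * n * (real m + 1))" for m
  have ampos: "am m > 0" for m using \<delta> n by (simp add: am_def)
  have amlim: "am \<longlonglongrightarrow> 0"
  proof -
    have "(\<lambda>m. (\<delta> / (2 * n)) * inverse (real m + 1)) \<longlonglongrightarrow> (\<delta> / (2 * n)) * 0"
      by (intro tendsto_mult tendsto_const) (use LIMSEQ_inverse_real_of_nat in \<open>simp add: add.commute\<close>)
    then show ?thesis by (simp add: am_def[abs_def] field_simps)
  qed
  have amsmall: "n * am m \<le> \<delta> / 2" for m
  proof -
    have "n * am m = \<delta> / (2 * (real m + 1))" using n by (simp add: am_def)
    also have "\<dots> \<le> \<delta> / 2" using \<delta> by (intro divide_left_mono) auto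
    finally show ?thesis .
  qed
  define \<psi> where "\<psi> m = convY f0 lo hi (kn (am m) (\<lambda>_. 0))" for m
  have \<psi>Z: "\<psi> m = convZ f0 (am m)" for m
    unfolding \<psi>_def by (rule ext, rule convY_convZ[OF f0 z'])
  have \<psi>p: "partial j (\<psi> m) x = convZ (D j) (am m) x" for m j x
    unfolding \<psi>Z using convZ_deriv[OF f0 Dc df, where j=j and a="am m" and x=x]
    by (intro partial_from_deriv(2)) (simp add: has_real_derivative_iff_has_vector_derivative)
  have sm: "smooth_on S (\<psi> m)" for S m
    unfolding \<psi>_def by (rule convY_smooth[OF f0 kn_cont kn_deriv])
  have outside: "\<forall>z\<in>cbox 0 (am m *\<^sub>R 1). x - z \<notin> K0" if "x \<notin> K1" for m x
  proof (intro ballI notI)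
    fix w assume w: "w \<in> cbox 0 (am m *\<^sub>R 1)" and xw: "x - w \<in> K0"
    have "norm w \<le> n * am m" using norm_cbox_bound[OF w] by (simp add: n_def)
    then have "w \<in> cball 0 (\<delta>/2)" using amsmall[of m] by simp
    then have "x \<in> K1" using xw unfolding K1_def by force
    with that show False by blast
  qed
  have \<psi>0: "\<psi> m x = 0" if "x \<notin> K1" for m x
    unfolding \<psi>Z by (rule convZ_zero) (use outside[OF that] z in blast)
  have \<psi>p0: "partial j (\<psi> m) x = 0" if "x \<notin> K1" for m j x
    unfolding \<psi>p by (rule convZ_zero) (use outside[OF that] Dz in blast)
  have supp: "closure {x. \<psi> m x \<noteq> 0} \<subseteq> K1" for m
    using \<psi>0 by (intro closure_minimal compact_imp_closed[OF K1c]) auto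
  have tf: "test_fun \<Omega> (\<psi> m)" for m
    unfolding test_fun_def
  proof (intro conjI sm)
    have "compact (closure {x. \<psi> m x \<noteq> 0} \<inter> K1)" using K1c by blast
    moreover have "closure {x. \<psi> m x \<noteq> 0} \<inter> K1 = closure {x. \<psi> m x \<noteq> 0}" using supp by blast
    ultimately show "compact (closure {x. \<psi> m x \<noteq> 0})" by simp
    show "closure {x. \<psi> m x \<noteq> 0} \<subseteq> \<Omega>" using supp K1\<Omega> by blast
  qed
  obtain B0 where B0: "\<And>y. \<bar>f0 y\<bar> \<le> B0"
  proof -
    have "bounded (f0 ` K0)" by (intro compact_imp_bounded compact_continuous_image continuous_on_subset[OF f0] K0) auto
    then obtain b where "\<forall>y\<in>K0. norm (f0 y) \<le> b" "b > 0" by (auto simp: bounded_pos)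
    then have "\<bar>f0 y\<bar> \<le> b" for y using z[of y] by (cases "y \<in> K0") auto
    then show ?thesis using that by blast
  qed
  have "\<exists>b. \<forall>y. \<bar>D j y\<bar> \<le> b" for j
  proof -
    have "bounded (D j ` K0)" by (intro compact_imp_bounded compact_continuous_image continuous_on_subset[OF Dc] K0) auto
    then obtain b where "\<forall>y\<in>K0. norm (D j y) \<le> b" "b > 0" by (auto simp: bounded_pos)
    then have "\<bar>D j y\<bar> \<le> b" for y using Dz[of y j] by (cases "y \<in> K0") auto
    then show ?thesis by blast
  qed
  then obtain BD where BD: "\<And>j y. \<bar>D j y\<bar> \<le> BD j" by metis
  define B where "B = \<bar>B0\<bar> + (\<Sum>j\<in>UNIV. \<bar>BD j\<bar>)"
  have BD': "\<bar>D j y\<bar> \<le> B" for j y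
  proof -
    have "BD j \<le> (\<Sum>j\<in>UNIV. \<bar>BD j\<bar>)"
      using member_le_sum[of j UNIV "\<lambda>j. \<bar>BD j\<bar>"] by simp
    then show ?thesis using BD[of j y] by (simp add: B_def)
  qed
  have B0': "\<bar>f0 y\<bar> \<le> B" for y
    using B0[of y] by (simp add: B_def) (smt (verit, ccfv_SIG) sum_nonneg abs_ge_zero)
  show ?thesis
  proof (rule that[of K1 \<psi> B])
    show "compact K1" "K1 \<subseteq> \<Omega>" by (fact K1c, fact K1\<Omega>)
    show "test_fun \<Omega> (\<psi> m)" for m by (rule tf)
    show "\<psi> m x = 0" if "x \<notin> K1" for m x using \<psi>0 that .
    show "partial j (\<psi> m) x = 0" if "x \<notin> K1" for m j x using \<psi>p0 that .
    show "\<bar>\<psi> m x\<bar> \<le> B" for m x unfolding \<psi>Z by (rule convZ_bound[OF f0 B0' ampos])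
    show "\<bar>partial j (\<psi> m) x\<bar> \<le> B" for m j x unfolding \<psi>p by (rule convZ_bound[OF Dc BD' ampos])
    show "(\<lambda>m. \<psi> m x) \<longlonglongrightarrow> f0 x" for x unfolding \<psi>Z by (rule convZ_tendsto[OF f0 amlim ampos])
    show "(\<lambda>m. partial j (\<psi> m) x) \<longlonglongrightarrow> D j x" for j x unfolding \<psi>p by (rule convZ_tendsto[OF Dc amlim ampos])
    show "continuous_on UNIV (\<psi> m)" for m using sm[of UNIV m] unfolding smooth_on_def
      by (metis iter_partial.simps(1))
    show "continuous_on UNIV (partial j (\<psi> m))" for m j using sm[of UNIV m] unfolding smooth_on_def
      by (metis iter_partial.simps)
  qed
qed

lemma cmod_powr_deriv:
  fixes v :: "real \<Rightarrow> complex"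
  assumes p: "p > 1" and v: "(v has_vector_derivative v') (at s)"
  shows "((\<lambda>t. cmod (v t) powr p) has_real_derivative p * cmod (v s) powr (p - 2) * Re (cnj (v s) * v')) (at s)"
proof (cases "v s = 0")
  case False
  define S where "S t = (Re (v t))\<^sup>2 + (Im (v t))\<^sup>2" for t
  have S: "cmod (v t) powr p = S t powr (p/2)" for t
  proof -
    have "cmod (v t) powr p = (cmod (v t) powr 2) powr (p/2)" by (subst powr_powr) simp
    also have "cmod (v t) powr 2 = S t" by (simp add: S_def cmod_power2 powr_realpow')
    finally show ?thesis .
  qed
  have Spos: "S s > 0" using False by (simp add: S_def cmod_power2[symmetric])
  have dS: "(S has_real_derivative 2 * Re (v s) * Re v' + 2 * Im (v s) * Im v') (at s)"
    unfolding S_def by (auto intro!: derivative_eq_intros v)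
  have "((\<lambda>t. S t powr (p/2)) has_real_derivative (p/2) * S s powr (p/2 - 1) * (2 * Re (v s) * Re v' + 2 * Im (v s) * Im v')) (at s)"
    by (rule DERIV_chain2[OF has_real_derivative_powr[OF Spos] dS, THEN DERIV_cong]) simp
  moreover have "S s powr (p/2 - 1) = cmod (v s) powr (p - 2)"
  proof -
    have "cmod (v s) powr (p - 2) = (cmod (v s) powr 2) powr (p/2 - 1)" by (subst powr_powr) (simp add: algebra_simps)
    also have "cmod (v s) powr 2 = S s" by (simp add: S_def cmod_power2 powr_realpow')
    finally show ?thesis by simp
  qed
  ultimately show ?thesis unfolding S by (simp add: algebra_simps)
next
  case True
  have "((\<lambda>t. cmod (v t) powr p) has_real_derivative 0) (at s)"
    unfolding has_field_derivative_def has_derivative_at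
  proof (intro conjI)
    show "bounded_linear ((*) 0 :: real \<Rightarrow> real)" by (rule bounded_linear_mult_right)
    have vd: "(\<lambda>h. cmod (v (s + h) - v s - h *\<^sub>R v') / \<bar>h\<bar>) \<midarrow>0\<rightarrow> 0"
      using v unfolding has_vector_derivative_def has_derivative_at by simp
    have lim: "(\<lambda>h. (cmod (v (s + h) - v s - h *\<^sub>R v') / \<bar>h\<bar> + cmod v') powr p * \<bar>h\<bar> powr (p - 1)) \<midarrow>0\<rightarrow> (0 + cmod v') powr p * 0 powr (p - 1)"
    proof -
      have ab: "(\<lambda>h::real. \<bar>h\<bar>) \<midarrow>0\<rightarrow> 0" using tendsto_rabs[OF tendsto_ident_at[of "0::real" UNIV]] by simp
      show ?thesis using p by (intro tendsto_intros vd ab) auto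
    qed
    have "(\<lambda>h. cmod (v (s + h)) powr p - cmod (v s) powr p - 0 * h) = (\<lambda>h. cmod (v (s + h)) powr p)"
      using True p by simp
    moreover have "(\<lambda>h. cmod (v (s + h)) powr p / \<bar>h\<bar>) \<midarrow>0\<rightarrow> 0"
    proof (rule Lim_null_comparison[OF _ lim[simplified]])
      show "\<forall>\<^sub>F h in at 0. norm (cmod (v (s + h)) powr p / \<bar>h\<bar>) \<le>
          (cmod (v (s + h) - v s - h *\<^sub>R v') / \<bar>h\<bar> + cmod v') powr p * \<bar>h\<bar> powr (p - 1)"
      proof (rule eventually_at_filter[THEN iffD2, OF always_eventually], intro allI impI)
        fix h :: real assume h: "h \<noteq> 0"
        have "cmod (v (s + h)) \<le> cmod (v (s + h) - v s - h *\<^sub>R v') + \<bar>h\<bar> * cmod v'"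
          using True norm_triangle_ineq[of "v (s + h) - h *\<^sub>R v'" "h *\<^sub>R v'"] by simp
        then have "cmod (v (s + h)) / \<bar>h\<bar> \<le> cmod (v (s + h) - v s - h *\<^sub>R v') / \<bar>h\<bar> + cmod v'"
          using h by (simp add: field_simps)
        then have "(cmod (v (s + h)) / \<bar>h\<bar>) powr p \<le> (cmod (v (s + h) - v s - h *\<^sub>R v') / \<bar>h\<bar> + cmod v') powr p"
          using p by (intro powr_mono2) auto
        moreover have "cmod (v (s + h)) powr p / \<bar>h\<bar> = (cmod (v (s + h)) / \<bar>h\<bar>) powr p * \<bar>h\<bar> powr (p - 1)"
          using h by (simp add: powr_divide powr_diff)
        ultimately show "norm (cmod (v (s + h)) powr p / \<bar>h\<bar>) \<le>
          (cmod (v (s + h) - v s - h *\<^sub>R v') / \<bar>h\<bar> + cmod v') powr p * \<bar>h\<bar> powr (p - 1)"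
          by (simp add: mult_right_mono)
      qed
    qed
    ultimately show "(\<lambda>h. norm (cmod (v (s + h)) powr p - cmod (v s) powr p - 0 * h) / norm h) \<midarrow>0\<rightarrow> 0"
      using True p by simp
  qed
  then show ?thesis using True by simp
qed

lemma cont_upow:
  fixes u U :: "'a::topological_space \<Rightarrow> complex"
  assumes p: "p > 1" and u: "continuous_on S u" and U: "continuous_on S U"
  shows "continuous_on S (\<lambda>x. cmod (u x) powr (p - 2) * Re (cnj (u x) * U x))"
  unfolding continuous_on_def
proof
  fix x assume x: "x \<in> S"
  have ut: "(u \<longlongrightarrow> u x) (at x within S)" and Ut: "(U \<longlongrightarrow> U x) (at x within S)"
    using u U x by (auto simp: continuous_on_def)
  show "((\<lambda>x. cmod (u x) powr (p - 2) * Re (cnj (u x) * U x)) \<longlongrightarrow> cmod (u x) powr (p - 2) * Re (cnj (u x) * U x)) (at x within S)"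
  proof (cases "u x = 0")
    case False
    then show ?thesis by (intro tendsto_intros ut Ut) auto
  next
    case True
    have lim: "((\<lambda>y. cmod (u y) powr (p - 1) * cmod (U y)) \<longlongrightarrow> cmod (u x) powr (p - 1) * cmod (U x)) (at x within S)"
      using p by (intro tendsto_intros ut Ut) auto
    have "((\<lambda>y. cmod (u y) powr (p - 2) * Re (cnj (u y) * U y)) \<longlongrightarrow> 0) (at x within S)"
    proof (rule Lim_null_comparison[OF always_eventually])
      show "\<forall>y. norm (cmod (u y) powr (p - 2) * Re (cnj (u y) * U y)) \<le> cmod (u y) powr (p - 1) * cmod (U y)"
      proof
        fix y
        have "norm (cmod (u y) powr (p - 2) * Re (cnj (u y) * U y)) \<le> cmod (u y) powr (p - 2) * (cmod (u y) * cmod (U y))"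
          using abs_Re_le_cmod[of "cnj (u y) * U y"] by (simp add: abs_mult norm_mult mult_left_mono)
        also have "\<dots> = (cmod (u y) * cmod (u y) powr (p - 2)) * cmod (U y)" by simp
        also have "cmod (u y) * cmod (u y) powr (p - 2) = cmod (u y) powr (p - 1)"
          by (subst powr_mult_base) auto
        finally show "norm (cmod (u y) powr (p - 2) * Re (cnj (u y) * U y)) \<le> cmod (u y) powr (p - 1) * cmod (U y)" .
      qed
      show "((\<lambda>y. cmod (u y) powr (p - 1) * cmod (U y)) \<longlongrightarrow> 0) (at x within S)"
        using lim True by simp
    qed
    then show ?thesis using True by simp
  qed
qed

lemma cont_extend:
  fixes f :: "real^'n::finite \<Rightarrow> 'b::real_normed_vector"
  assumes \<Omega>: "open \<Omega>" and f: "continuous_on \<Omega> f" and K: "closed K" "K \<subseteq> \<Omega>"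
    and z: "\<And>x. x \<notin> K \<Longrightarrow> f x = 0"
  shows "continuous_on UNIV f"
proof -
  have "isCont f x" for x
  proof (cases "x \<in> \<Omega>")
    case True
    then show ?thesis using continuous_on_eq_continuous_at[OF \<Omega>] f by blast
  next
    case False
    then have xK: "x \<in> - K" using K by auto
    have "continuous_on (- K) f"
      by (rule continuous_on_cong[THEN iffD1, OF refl _ continuous_on_const[of _ 0]]) (use z in auto)
    then show ?thesis using continuous_on_eq_continuous_at[of "- K" f] K xK by (auto simp: open_Compl)
  qed
  then show ?thesis by (simp add: continuous_at_imp_continuous_on)
qed

lemma loc_zero_deriv:
  fixes f :: "real^'n::finite \<Rightarrow> 'b::real_normed_vector"
  assumes K: "closed K" and z: "\<And>y. y \<notin> K \<Longrightarrow> f y = 0" and w: "w \<notin> K"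
  shows "((\<lambda>t. f (w + t *\<^sub>R axis j 1)) has_vector_derivative 0) (at 0)"
proof -
  obtain r where r: "r > 0" "ball w r \<subseteq> - K"
    using K w open_contains_ball[of "- K"] by (auto simp: open_Compl)
  have "((\<lambda>t. 0::'b) has_vector_derivative 0) (at (0::real))" by (rule has_vector_derivative_const)
  then show "((\<lambda>t. f (w + t *\<^sub>R axis j 1)) has_vector_derivative 0) (at 0)"
  proof (rule has_vector_derivative_transform_within_open[where S="ball 0 r"])
    fix t :: real assume "t \<in> ball 0 r"
    then have "w + t *\<^sub>R axis j 1 \<in> ball w r"
      by (simp add: dist_norm)
    then show "0 = f (w + t *\<^sub>R axis j 1)" using r z by auto
  qed (use r in auto)
qed

lemma partial_zero_outside:
  fixes f :: "real^'n::finite \<Rightarrow> 'b::real_normed_vector"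
  assumes K: "closed K" and z: "\<And>y. y \<notin> K \<Longrightarrow> f y = 0" and w: "w \<notin> K"
  shows "partial_exists j f w" "partial j f w = 0"
proof -
  have "((\<lambda>t. f (w + t *\<^sub>R axis j 1)) has_vector_derivative 0) (at 0)" by (rule loc_zero_deriv[OF K z w])
  then show "partial_exists j f w" "partial j f w = 0" by (rule partial_from_deriv)+
qed

lemma hdotZ_alt:
  "hdotZ \<sigma> Z f x = (\<Sum>j\<in>UNIV. (\<Sum>i\<in>UNIV. Z x $ i * \<sigma> x $ i $ j) *\<^sub>R partial j f x)"
proof -
  have "hdotZ \<sigma> Z f x = (\<Sum>i\<in>UNIV. \<Sum>j\<in>UNIV. (Z x $ i * \<sigma> x $ i $ j) *\<^sub>R partial j f x)"
    unfolding hdotZ_def hgrad_def by (simp add: scaleR_sum_right)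
  also have "\<dots> = (\<Sum>j\<in>UNIV. \<Sum>i\<in>UNIV. (Z x $ i * \<sigma> x $ i $ j) *\<^sub>R partial j f x)"
    by (rule sum.swap)
  also have "\<dots> = (\<Sum>j\<in>UNIV. (\<Sum>i\<in>UNIV. Z x $ i * \<sigma> x $ i $ j) *\<^sub>R partial j f x)"
    by (simp add: scaleR_sum_left)
  finally show ?thesis .
qed

lemma Q_deriv:
  fixes g :: "real \<Rightarrow> real"
  assumes g: "(g has_real_derivative d) (at s)" and gs: "g s \<noteq> 0"
  shows "((\<lambda>t. g t * \<bar>g t\<bar> powr (- p)) has_real_derivative (1 - p) * \<bar>g s\<bar> powr (- p) * d) (at s)"
proof -
  have eq: "\<bar>y\<bar> powr (- p) = (y\<^sup>2) powr (- p / 2)" for y :: real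
  proof -
    have "(y\<^sup>2) powr (- p / 2) = (\<bar>y\<bar> powr 2) powr (- p / 2)" by (simp add: powr_realpow')
    also have "\<dots> = \<bar>y\<bar> powr (- p)" by (subst powr_powr) simp
    finally show ?thesis by simp
  qed
  have pos: "(g s)\<^sup>2 > 0" using gs by simp
  have d2: "((\<lambda>t. (g t)\<^sup>2) has_real_derivative 2 * g s * d) (at s)"
    by (auto intro!: derivative_eq_intros g)
  have d3: "((\<lambda>t. ((g t)\<^sup>2) powr (- p / 2)) has_real_derivative (- p / 2) * ((g s)\<^sup>2) powr (- p / 2 - 1) * (2 * g s * d)) (at s)"
    using DERIV_chain2[where f="\<lambda>z. z powr (- p / 2)", OF has_real_derivative_powr[OF pos, of "- p / 2"] d2] by simp
  have D1: "((\<lambda>t. g t * ((g t)\<^sup>2) powr (- p / 2)) has_real_derivative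
      d * ((g s)\<^sup>2) powr (- p / 2) + g s * ((- p / 2) * ((g s)\<^sup>2) powr (- p / 2 - 1) * (2 * g s * d))) (at s)"
    by (rule DERIV_mult[OF g d3, THEN DERIV_cong]) (simp add: algebra_simps)
  have AB: "(g s)\<^sup>2 * ((g s)\<^sup>2) powr (- p / 2 - 1) = ((g s)\<^sup>2) powr (- p / 2)"
    using pos by (subst powr_mult_base) auto
  have E: "g s * ((- p / 2) * ((g s)\<^sup>2) powr (- p / 2 - 1) * (2 * g s * d)) = - p * d * ((g s)\<^sup>2 * ((g s)\<^sup>2) powr (- p / 2 - 1))"
    by (simp add: power2_eq_square algebra_simps)
  have E2: "d * ((g s)\<^sup>2) powr (- p / 2) + g s * ((- p / 2) * ((g s)\<^sup>2) powr (- p / 2 - 1) * (2 * g s * d))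
      = (1 - p) * ((g s)\<^sup>2) powr (- p / 2) * d"
    unfolding E AB by (simp add: algebra_simps)
  have "((\<lambda>t. g t * ((g t)\<^sup>2) powr (- p / 2)) has_real_derivative
      (1 - p) * ((g s)\<^sup>2) powr (- p / 2) * d) (at s)"
    using D1 unfolding E2 .
  then show ?thesis unfolding eq .
qed

lemma quot_deriv:
  fixes v :: "real \<Rightarrow> complex" and g :: "real \<Rightarrow> real"
  assumes v: "(v has_vector_derivative v') (at s)" and g: "(g has_real_derivative d) (at s)" and gs: "g s \<noteq> 0"
  shows "((\<lambda>t. v t / complex_of_real (g t)) has_vector_derivative
     (v' * complex_of_real (g s) - v s * complex_of_real d) / complex_of_real ((g s)\<^sup>2)) (at s)"
proof -
  have "((\<lambda>t. inverse (g t) *\<^sub>R v t) has_vector_derivative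
      inverse (g s) *\<^sub>R v' + (- (inverse (g s) * d * inverse (g s))) *\<^sub>R v s) (at s)"
  proof (intro has_vector_derivative_scaleR v)
    show "((\<lambda>x. inverse (g x)) has_real_derivative - (inverse (g s) * d * inverse (g s))) (at s)"
      by (rule DERIV_inverse_fun[OF g gs, THEN DERIV_cong]) (simp add: power2_eq_square field_simps)
  qed
  moreover have "(\<lambda>t. inverse (g t) *\<^sub>R v t) = (\<lambda>t. v t / complex_of_real (g t))"
    by (rule ext) (simp add: scaleR_conv_of_real divide_inverse mult.commute)
  moreover have "inverse (g s) *\<^sub>R v' + (- (inverse (g s) * d * inverse (g s))) *\<^sub>R v s
      = (v' * complex_of_real (g s) - v s * complex_of_real d) / complex_of_real ((g s)\<^sup>2)"
  proof -
    have gs': "complex_of_real (g s) \<noteq> 0" using gs by simp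
    show ?thesis using gs' unfolding scaleR_conv_of_real
      by (simp add: divide_simps power2_eq_square)
  qed
  ultimately show ?thesis by simp
qed

lemma Re_key:
  fixes a d phi :: real and u gu :: complex
  assumes phi: "phi \<noteq> 0"
  shows "Re ((complex_of_real a * u * complex_of_real d / complex_of_real phi) *
      cnj (complex_of_real (a * phi) * ((gu * complex_of_real phi - u * complex_of_real d) / complex_of_real (phi\<^sup>2))))
    = a\<^sup>2 * d / phi\<^sup>2 * (phi * Re (u * cnj gu) - d * (cmod u)\<^sup>2)"
proof -
  obtain x y where u: "u = Complex x y" by (cases u)
  obtain x' y' where gu: "gu = Complex x' y'" by (cases gu)
  show ?thesis using phi unfolding cmod_power2 u gu
    by (simp add: field_simps power2_eq_square)
qed

lemma powr2: "(x::real) \<ge> 0 \<Longrightarrow> x powr 2 = x\<^sup>2"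
  using powr_realpow'[of x 2] by simp

lemma Cp_ident:
  fixes V phi d p :: real and u gu :: complex
  assumes p: "p > 1" and V: "V \<ge> 0" and phi: "phi \<noteq> 0"
  shows "Cp p (complex_of_real (V powr (1/p)) * gu)
           (complex_of_real (V powr (1/p) * phi) * ((gu * complex_of_real phi - u * complex_of_real d) / complex_of_real (phi\<^sup>2)))
       = V * cmod gu powr p - V * \<bar>d\<bar> powr (p-2) * d * ((p * cmod u powr (p-2) * Re (cnj u * gu)) * (phi * \<bar>phi\<bar> powr (-p))
            + cmod u powr p * ((1-p) * \<bar>phi\<bar> powr (-p) * d))"
proof -
  define a where "a = V powr (1/p)"
  have a0: "a \<ge> 0" by (simp add: a_def)
  have aV: "a powr p = V" using V p unfolding a_def by (subst powr_powr) simp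
  define \<xi> where "\<xi> = complex_of_real a * gu"
  define \<eta> where "\<eta> = complex_of_real (a * phi) * ((gu * complex_of_real phi - u * complex_of_real d) / complex_of_real (phi\<^sup>2))"
  have diff: "\<xi> - \<eta> = complex_of_real a * u * complex_of_real d / complex_of_real phi"
    using phi unfolding \<xi>_def \<eta>_def by (simp add: field_simps power2_eq_square)
  have n\<xi>: "cmod \<xi> powr p = V * cmod gu powr p"
    unfolding \<xi>_def using a0 by (simp add: norm_mult powr_mult aV)
  have LHS: "Cp p (complex_of_real (V powr (1/p)) * gu)
           (complex_of_real (V powr (1/p) * phi) * ((gu * complex_of_real phi - u * complex_of_real d) / complex_of_real (phi\<^sup>2)))
      = V * cmod gu powr p - cmod (\<xi> - \<eta>) powr p - p * cmod (\<xi> - \<eta>) powr (p - 2) * Re ((\<xi> - \<eta>) * cnj \<eta>)"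
    unfolding Cp_def n\<xi>[symmetric] by (simp add: \<xi>_def \<eta>_def a_def)
  show ?thesis
  proof (cases "a = 0 \<or> u = 0 \<or> d = 0")
    case True
    then have z: "\<xi> - \<eta> = 0" unfolding diff by auto
    have "V = 0 \<or> u = 0 \<or> d = 0" using True aV p by auto
    then show ?thesis unfolding LHS z by auto
  next
    case False
    then have apos: "a > 0" and u0: "u \<noteq> 0" and d0: "d \<noteq> 0" using a0 by auto
    define A2 where "A2 = a powr (p - 2)"
    define Pu where "Pu = cmod u powr (p - 2)"
    define Pd where "Pd = \<bar>d\<bar> powr (p - 2)"
    define Pf where "Pf = \<bar>phi\<bar> powr (p - 2)"
    have Pfpos: "Pf > 0" using phi by (simp add: Pf_def)
    have r1: "V = A2 * a\<^sup>2"
    proof -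
      have "a powr p = a powr (p - 2) * a powr 2" by (subst powr_add[symmetric]) simp
      then show ?thesis using aV apos by (simp add: A2_def powr2)
    qed
    have r2: "cmod u powr p = Pu * (cmod u)\<^sup>2"
    proof -
      have "cmod u powr p = cmod u powr (p - 2) * cmod u powr 2" by (subst powr_add[symmetric]) simp
      then show ?thesis by (simp add: Pu_def powr2)
    qed
    have r3: "\<bar>d\<bar> powr p = Pd * d\<^sup>2"
    proof -
      have "\<bar>d\<bar> powr p = \<bar>d\<bar> powr (p - 2) * \<bar>d\<bar> powr 2" by (subst powr_add[symmetric]) simp
      then show ?thesis by (simp add: Pd_def powr2)
    qed
    have r4: "\<bar>phi\<bar> powr p = Pf * phi\<^sup>2"
    proof -
      have "\<bar>phi\<bar> powr p = \<bar>phi\<bar> powr (p - 2) * \<bar>phi\<bar> powr 2" by (subst powr_add[symmetric]) simp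
      then show ?thesis by (simp add: Pf_def powr2)
    qed
    have r5: "\<bar>phi\<bar> powr (- p) = 1 / (Pf * phi\<^sup>2)"
      using r4 by (simp add: powr_minus divide_inverse)
    have nd: "cmod (\<xi> - \<eta>) = a * cmod u * \<bar>d\<bar> / \<bar>phi\<bar>"
      unfolding diff using a0 by (simp add: norm_mult norm_divide)
    have n1: "cmod (\<xi> - \<eta>) powr p = V * (Pu * (cmod u)\<^sup>2) * (Pd * d\<^sup>2) / (Pf * phi\<^sup>2)"
      unfolding nd using a0 by (simp add: powr_mult powr_divide aV r2 r3 r4)
    have n2: "cmod (\<xi> - \<eta>) powr (p - 2) = A2 * Pu * Pd / Pf"
      unfolding nd using a0 by (simp add: powr_mult powr_divide A2_def Pu_def Pd_def Pf_def)
    have re: "Re ((\<xi> - \<eta>) * cnj \<eta>) = a\<^sup>2 * d / phi\<^sup>2 * (phi * Re (u * cnj gu) - d * (cmod u)\<^sup>2)"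
      unfolding diff by (simp only: \<eta>_def Re_key[OF phi])
    have rc: "Re (cnj u * gu) = Re (u * cnj gu)"
      by (simp add: algebra_simps)
    have dd: "\<bar>d\<bar> powr (p - 2) * d * d = Pd * d\<^sup>2" by (simp add: Pd_def power2_eq_square)
    show ?thesis unfolding LHS n1 n2 re rc r5 r2
      apply (simp only: Pd_def[symmetric] Pu_def[symmetric] r1)
      using phi Pfpos by (simp add: field_simps power2_eq_square)
  qed
qed

lemma open_sets_lebesgue: "open S \<Longrightarrow> S \<in> sets lebesgue"
  by (metis borel_open sets_completionI_sets sets_lborel)

lemma setint_M:
  fixes f :: "real^'n::finite \<Rightarrow> real"
  assumes "S \<in> sets lebesgue"
  shows "(LINT x:S|lebesgue. f x) = integral\<^sup>L (lebesgue_on S) f"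
  using assms by (simp add: set_lebesgue_integral_def integral_restrict_space)

lemma W_meas:
  fixes W :: "real^'n::finite \<Rightarrow> real"
  assumes "set_integrable lebesgue K W"
  shows "(\<lambda>x. indicator K x * W x) \<in> borel_measurable (lebesgue_on S)"
proof -
  have "(\<lambda>x. indicator K x *\<^sub>R W x) \<in> borel_measurable lebesgue"
    using assms unfolding set_integrable_def by (rule borel_measurable_integrable)
  then show ?thesis by (intro measurable_restrict_space1) simp
qed

lemma int_M_from_set:
  fixes f :: "real^'n::finite \<Rightarrow> real"
  assumes "set_integrable lebesgue K f" "K \<subseteq> S" "S \<in> sets lebesgue"
  shows "integrable (lebesgue_on S) (\<lambda>x. indicator K x * f x)"
proof -
  have "integrable lebesgue (\<lambda>x. indicator S x *\<^sub>R (indicator K x * f x))"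
  proof -
    have "(\<lambda>x. indicator S x *\<^sub>R (indicator K x * f x)) = (\<lambda>x. indicator K x *\<^sub>R f x)"
      using assms(2) by (auto simp: indicator_def fun_eq_iff)
    then show ?thesis using assms(1) unfolding set_integrable_def by simp
  qed
  then show ?thesis using assms(3) by (simp add: integrable_restrict_space)
qed

lemma gbound:
  fixes Z :: "real^'l::finite" and \<sigma> :: "real^'n::finite^'l" and F :: "'n \<Rightarrow> 'b::real_normed_vector"
  shows "norm (\<Sum>j\<in>UNIV. (\<Sum>i\<in>UNIV. Z $ i * \<sigma> $ i $ j) *\<^sub>R F j)
     \<le> norm Z * (\<Sum>j\<in>UNIV. \<Sum>i\<in>UNIV. \<bar>\<sigma> $ i $ j\<bar>) * (\<Sum>j\<in>UNIV. norm (F j))"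
proof -
  have c: "\<bar>\<Sum>i\<in>UNIV. Z $ i * \<sigma> $ i $ j\<bar> \<le> norm Z * (\<Sum>i\<in>UNIV. \<bar>\<sigma> $ i $ j\<bar>)" for j
  proof -
    have "\<bar>\<Sum>i\<in>UNIV. Z $ i * \<sigma> $ i $ j\<bar> \<le> (\<Sum>i\<in>UNIV. \<bar>Z $ i\<bar> * \<bar>\<sigma> $ i $ j\<bar>)"
      by (rule order_trans[OF sum_abs]) (simp add: abs_mult)
    also have "\<dots> \<le> (\<Sum>i\<in>UNIV. norm Z * \<bar>\<sigma> $ i $ j\<bar>)"
      by (intro sum_mono mult_right_mono) (auto simp: component_le_norm_cart)
    finally show ?thesis by (simp add: sum_distrib_left)
  qed
  have "norm (\<Sum>j\<in>UNIV. (\<Sum>i\<in>UNIV. Z $ i * \<sigma> $ i $ j) *\<^sub>R F j) \<le> (\<Sum>j\<in>UNIV. \<bar>\<Sum>i\<in>UNIV. Z $ i * \<sigma> $ i $ j\<bar> * norm (F j))"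
    by (rule order_trans[OF norm_sum]) simp
  also have "\<dots> \<le> (\<Sum>j\<in>UNIV. (norm Z * (\<Sum>j\<in>UNIV. \<Sum>i\<in>UNIV. \<bar>\<sigma> $ i $ j\<bar>)) * norm (F j))"
  proof (intro sum_mono mult_right_mono)
    fix j
    have "(\<Sum>i\<in>UNIV. \<bar>\<sigma> $ i $ j\<bar>) \<le> (\<Sum>j\<in>UNIV. \<Sum>i\<in>UNIV. \<bar>\<sigma> $ i $ j\<bar>)"
      by (rule member_le_sum) (auto intro: sum_nonneg)
    then show "\<bar>\<Sum>i\<in>UNIV. Z $ i * \<sigma> $ i $ j\<bar> \<le> norm Z * (\<Sum>j\<in>UNIV. \<Sum>i\<in>UNIV. \<bar>\<sigma> $ i $ j\<bar>)"
      using c[of j] by (meson mult_left_mono norm_ge_zero order_trans)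
  qed simp
  finally show ?thesis by (simp add: sum_distrib_left mult.assoc)
qed

lemma cbound:
  fixes f :: "real^'n::finite \<Rightarrow> real"
  assumes "compact K" "continuous_on K f"
  obtains b where "b \<ge> 0" "\<And>x. x \<in> K \<Longrightarrow> \<bar>f x\<bar> \<le> b"
proof -
  have "bounded (f ` K)" by (intro compact_imp_bounded compact_continuous_image assms)
  then obtain b where "b > 0" "\<forall>y\<in>f ` K. norm y \<le> b" by (auto simp: bounded_pos)
  then show ?thesis using that[of b] by auto
qed

lemma est:
  fixes V g h nZ C1 C2 p :: real
  assumes p: "p > 1" and V: "V \<ge> 0" and nZ: "nZ \<ge> 0" and C1: "C1 \<ge> 0"
    and g: "\<bar>g\<bar> \<le> nZ * C1" and h: "\<bar>h\<bar> \<le> nZ * C2"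
  shows "\<bar>V * \<bar>g\<bar> powr (p - 2) * g * h\<bar> \<le> V * nZ powr p * (C1 powr (p - 1) * C2)"
proof -
  have gg: "\<bar>g\<bar> * \<bar>g\<bar> powr (p - 2) = \<bar>g\<bar> powr (p - 1)"
    by (subst powr_mult_base) auto
  have e1: "\<bar>V * \<bar>g\<bar> powr (p - 2) * g * h\<bar> = V * \<bar>g\<bar> powr (p - 1) * \<bar>h\<bar>"
    using V gg by (simp add: abs_mult algebra_simps)
  have e2: "V * \<bar>g\<bar> powr (p - 1) * \<bar>h\<bar> \<le> V * (nZ * C1) powr (p - 1) * (nZ * C2)"
    using p V g h by (intro mult_mono mult_left_mono powr_mono2) auto
  have nn: "nZ * nZ powr (p - 1) = nZ powr p"
    using nZ by (subst powr_mult_base) auto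
  have e3: "(nZ * C1) powr (p - 1) * (nZ * C2) = nZ powr p * (C1 powr (p - 1) * C2)"
    unfolding nn[symmetric] by (simp add: powr_mult algebra_simps)
  show ?thesis using e1 e2 e3 by (simp add: mult.assoc)
qed

lemma sum_quot:
  fixes c d :: "'j \<Rightarrow> real" and U :: "'j \<Rightarrow> complex" and w :: complex and a b :: real
  shows "(\<Sum>j\<in>A. c j *\<^sub>R ((U j * complex_of_real a - w * complex_of_real (d j)) / complex_of_real b))
     = ((\<Sum>j\<in>A. c j *\<^sub>R U j) * complex_of_real a - w * complex_of_real (\<Sum>j\<in>A. c j * d j)) / complex_of_real b"
  by (simp add: scaleR_conv_of_real sum_divide_distrib[symmetric] sum_distrib_left sum_distrib_right
      sum_subtractf algebra_simps)

lemma sum_G0: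
  fixes c d :: "'j \<Rightarrow> real" and U :: "'j \<Rightarrow> complex" and w :: complex and P Q N k :: real
  shows "(\<Sum>j\<in>A. c j * (P * Re (cnj w * U j) * Q + N * (k * d j)))
     = P * Re (cnj w * (\<Sum>j\<in>A. c j *\<^sub>R U j)) * Q + N * (k * (\<Sum>j\<in>A. c j * d j))"
  by (simp add: scaleR_conv_of_real sum_distrib_left sum_distrib_right sum.distrib algebra_simps)

theorem theorem3p1:
  fixes p :: real and \<Omega> :: "(real^'n::finite) set"
    and \<sigma> :: "real^'n \<Rightarrow> real^'n^'l::finite"
    and Z :: "real^'n \<Rightarrow> real^'l" and V W :: "real^'n \<Rightarrow> real"
    and lam :: real and \<phi> :: "real^'n \<Rightarrow> real" and u :: "real^'n \<Rightarrow> complex"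
  assumes sigma_cont: "\<And>i j. continuous_on UNIV (\<lambda>x. \<sigma> x $ i $ j)"
    and sigma_pd: "\<And>i j x. partial_exists j (\<lambda>x. \<sigma> x $ i $ j) x"
    and sigma_pd_cont: "\<And>i j. continuous_on UNIV (partial j (\<lambda>x. \<sigma> x $ i $ j))"
    and p: "1 < p"
    and \<Omega>: "open \<Omega>"
    and Z_meas: "Z \<in> borel_measurable (lebesgue_on \<Omega>)"
    and V_meas: "V \<in> borel_measurable (lebesgue_on \<Omega>)"
    and V_nonneg: "\<And>x. x \<in> \<Omega> \<Longrightarrow> V x \<ge> 0"
    and W_loc: "loc_integrable \<Omega> W"
    and VZ_loc: "loc_integrable \<Omega> (\<lambda>x. V x * norm (Z x) powr p)"
    and lam: "lam > 0"
    and phi_C1: "C1_on \<Omega> \<phi>"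
    and phi_nz: "\<And>x. x \<in> \<Omega> \<Longrightarrow> \<phi> x \<noteq> 0"
    and phi_sol: "\<And>\<psi> :: real^'n \<Rightarrow> real. test_fun \<Omega> \<psi> \<Longrightarrow>
        (LINT x:\<Omega>|lebesgue. V x * \<bar>hdotZ \<sigma> Z \<phi> x\<bar> powr (p - 2) * hdotZ \<sigma> Z \<phi> x * hdotZ \<sigma> Z \<psi> x)
        = lam *  (LINT x:\<Omega>|lebesgue. W x * \<bar>\<phi> x\<bar> powr (p - 2) * \<phi> x * \<psi> x)"
    and u: "test_fun \<Omega> u"
  shows "(LINT x:\<Omega>|lebesgue. V x * norm (hdotZ \<sigma> Z u x) powr p)
       = lam *  (LINT x:\<Omega>|lebesgue. W x * norm (u x) powr p)
         + (LINT x:\<Omega>|lebesgue.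
              Cp p (complex_of_real (V x powr (1 / p)) * hdotZ \<sigma> Z u x)
                   (complex_of_real (V x powr (1 / p) * \<phi> x)
                      * hdotZ \<sigma> Z (\<lambda>y. u y / complex_of_real (\<phi> y)) x))"
proof -
  have \<Omega>L: "\<Omega> \<in> sets lebesgue" by (rule open_sets_lebesgue[OF \<Omega>])
  define K0 where "K0 = closure {x. u x \<noteq> 0}"
  have u_sm: "smooth_on \<Omega> u" and K0c: "compact K0" and K0\<Omega>: "K0 \<subseteq> \<Omega>"
    using u unfolding test_fun_def K0_def by (blast, blast, blast)
  have K0cl: "closed K0" using K0c by (rule compact_imp_closed)
  have uz: "u x = 0" if "x \<notin> K0" for x
  proof (rule ccontr)
    assume "u x \<noteq> 0"
    then have "x \<in> {x. u x \<noteq> 0}" by simp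
    then have "x \<in> K0" unfolding K0_def by (rule closure_subset[THEN subsetD])
    with that show False by simp
  qed
  have usm: "(\<forall>j. \<forall>x\<in>\<Omega>. partial_exists j (iter_partial js u) x) \<and> continuous_on \<Omega> (iter_partial js u)" for js
    using u_sm unfolding smooth_on_def by (rule spec)
  have u_pe: "partial_exists j u x" if "x \<in> \<Omega>" for j x
    using usm[of "[]"] that by simp
  have u_c: "continuous_on \<Omega> u"
    using usm[of "[]"] by simp
  have u_pc: "continuous_on \<Omega> (partial j u)" for j
    using usm[of "[j]"] by simp
  have u_p0: "partial j u x = 0" if "x \<notin> K0" for j x
    using partial_zero_outside(2)[OF K0cl uz that] .
  have ph_c: "continuous_on \<Omega> \<phi>" and ph_pe: "\<And>j x. x \<in> \<Omega> \<Longrightarrow> partial_exists j \<phi> x"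
    and ph_pc: "\<And>j. continuous_on \<Omega> (partial j \<phi>)"
    using phi_C1 unfolding C1_on_def by auto
  define cc where "cc x j = (\<Sum>i\<in>UNIV. Z x $ i * \<sigma> x $ i $ j)" for x j
  have hd: "hdotZ \<sigma> Z f x = (\<Sum>j\<in>UNIV. cc x j *\<^sub>R partial j f x)" for f :: "real^'n \<Rightarrow> 'b::real_normed_vector" and x
    by (simp add: hdotZ_alt cc_def)
  define N where "N x = cmod (u x) powr p" for x
  define Q where "Q x = \<phi> x * \<bar>\<phi> x\<bar> powr (- p)" for x
  define DN where "DN j x = p * cmod (u x) powr (p - 2) * Re (cnj (u x) * partial j u x)" for j x
  define \<psi>0 where "\<psi>0 x = (if x \<in> \<Omega> then N x * Q x else 0)" for x
  define D\<psi> where "D\<psi> j x = (if x \<in> \<Omega> then DN j x * Q x + N x * ((1 - p) * \<bar>\<phi> x\<bar> powr (- p) * partial j \<phi> x) else 0)" for j x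
  have \<psi>0z: "\<psi>0 x = 0" if "x \<notin> K0" for x
    using uz[OF that] p by (simp add: \<psi>0_def N_def)
  have D\<psi>z: "D\<psi> j x = 0" if "x \<notin> K0" for j x
    using uz[OF that] p by (simp add: D\<psi>_def N_def DN_def)
  have \<psi>0d: "((\<lambda>t. \<psi>0 (w + t *\<^sub>R axis j 1)) has_field_derivative D\<psi> j w) (at 0)" for j w
  proof (cases "w \<in> \<Omega>")
    case True
    define S where "S = {t::real. w + t *\<^sub>R axis j 1 \<in> \<Omega>}"
    have Sopen: "open S" unfolding S_def
      by (intro open_vimage[OF \<Omega>, unfolded vimage_def, where f="\<lambda>t. w + t *\<^sub>R axis j 1", simplified]) (intro continuous_intros)
    have S0: "0 \<in> S" using True by (simp add: S_def)
    have dN: "((\<lambda>t. N (w + t *\<^sub>R axis j 1)) has_real_derivative DN j w) (at 0)"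
      unfolding N_def DN_def
      using cmod_powr_deriv[OF p partial_deriv[OF u_pe[OF True]]] by simp
    have dph: "((\<lambda>t. \<phi> (w + t *\<^sub>R axis j 1)) has_real_derivative partial j \<phi> w) (at 0)"
      using partial_deriv[OF ph_pe[OF True]] by (simp add: has_real_derivative_iff_has_vector_derivative)
    have dQ: "((\<lambda>t. Q (w + t *\<^sub>R axis j 1)) has_real_derivative (1 - p) * \<bar>\<phi> w\<bar> powr (- p) * partial j \<phi> w) (at 0)"
      unfolding Q_def using Q_deriv[OF dph] phi_nz[OF True] by simp
    have "((\<lambda>t. N (w + t *\<^sub>R axis j 1) * Q (w + t *\<^sub>R axis j 1)) has_real_derivative D\<psi> j w) (at 0)"
      using DERIV_mult[OF dN dQ] True by (simp add: D\<psi>_def algebra_simps)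
    then show ?thesis
      by (rule has_field_derivative_transform_within_open[OF _ Sopen S0]) (simp add: S_def \<psi>0_def)
  next
    case False
    then have wK: "w \<notin> K0" using K0\<Omega> by blast
    show ?thesis
      using loc_zero_deriv[OF K0cl \<psi>0z wK, where j=j] D\<psi>z[OF wK, of j]
      by (simp add: has_real_derivative_iff_has_vector_derivative)
  qed
  have Nc: "continuous_on \<Omega> N" unfolding N_def
    using p by (intro continuous_on_powr' continuous_intros u_c) auto
  have Qc: "continuous_on \<Omega> Q" unfolding Q_def
    using phi_nz by (intro continuous_intros ph_c) auto
  have \<psi>0c: "continuous_on UNIV \<psi>0"
  proof (rule cont_extend[OF \<Omega> _ K0cl K0\<Omega> \<psi>0z])
    show "continuous_on \<Omega> \<psi>0"
      by (rule continuous_on_cong[THEN iffD1, OF refl _ continuous_on_mult[OF Nc Qc]]) (simp add: \<psi>0_def)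
  qed
  have D\<psi>c: "continuous_on UNIV (D\<psi> j)" for j
  proof (rule cont_extend[OF \<Omega> _ K0cl K0\<Omega> D\<psi>z])
    have DNc: "continuous_on \<Omega> (DN j)"
    proof -
      have "continuous_on \<Omega> (\<lambda>x. p * (cmod (u x) powr (p - 2) * Re (cnj (u x) * partial j u x)))"
        by (intro continuous_on_mult continuous_on_const cont_upow[OF p u_c u_pc])
      then show ?thesis unfolding DN_def[abs_def] by (simp add: mult.assoc)
    qed
    have "continuous_on \<Omega> (\<lambda>x. DN j x * Q x + N x * ((1 - p) * \<bar>\<phi> x\<bar> powr (- p) * partial j \<phi> x))"
      using phi_nz by (intro continuous_on_add continuous_on_mult DNc Qc Nc continuous_on_const continuous_on_powr continuous_on_rabs ph_c ph_pc) auto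
    then show "continuous_on \<Omega> (D\<psi> j)"
      by (rule continuous_on_cong[THEN iffD1, OF refl, rotated]) (simp add: D\<psi>_def)
  qed
  obtain K1 and \<psi> :: "nat \<Rightarrow> real^'n \<Rightarrow> real" and B where
    K1c: "compact K1" and K1\<Omega>: "K1 \<subseteq> \<Omega>"
    and \<psi>tf: "\<And>m. test_fun \<Omega> (\<psi> m)"
    and \<psi>z: "\<And>m x. x \<notin> K1 \<Longrightarrow> \<psi> m x = 0"
    and \<psi>pz: "\<And>m j x. x \<notin> K1 \<Longrightarrow> partial j (\<psi> m) x = 0"
    and \<psi>B: "\<And>m x. \<bar>\<psi> m x\<bar> \<le> B"
    and \<psi>pB: "\<And>m j x. \<bar>partial j (\<psi> m) x\<bar> \<le> B"
    and \<psi>lim: "\<And>x. (\<lambda>m. \<psi> m x) \<longlonglongrightarrow> \<psi>0 x"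
    and \<psi>plim: "\<And>j x. (\<lambda>m. partial j (\<psi> m) x) \<longlonglongrightarrow> D\<psi> j x"
    and \<psi>c: "\<And>m. continuous_on UNIV (\<psi> m)"
    and \<psi>pc: "\<And>m j. continuous_on UNIV (partial j (\<psi> m))"
    apply (rule approx_C1[OF \<psi>0c D\<psi>c \<psi>0d K0c K0\<Omega> \<psi>0z \<Omega>])
     apply assumption
    apply (rule that)
              apply assumption+
    done
  define KK where "KK = K0 \<union> K1"
  have KKc: "compact KK" and KK\<Omega>: "KK \<subseteq> \<Omega>" using K0c K1c K0\<Omega> K1\<Omega> by (auto simp: KK_def)
  have K1KK: "K1 \<subseteq> KK" and K0KK: "K0 \<subseteq> KK" by (auto simp: KK_def)
  have \<psi>0K1: "\<psi>0 x = 0" if "x \<notin> K1" for x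
  proof -
    have "(\<lambda>m. \<psi> m x) = (\<lambda>m. 0)" using \<psi>z[OF that] by simp
    with \<psi>lim[of x] have "(\<lambda>m. 0::real) \<longlonglongrightarrow> \<psi>0 x" by simp
    then show ?thesis using LIMSEQ_unique[OF tendsto_const] by metis
  qed
  have D\<psi>K1: "D\<psi> j x = 0" if "x \<notin> K1" for j x
  proof -
    have "(\<lambda>m. partial j (\<psi> m) x) = (\<lambda>m. 0)" using \<psi>pz[OF that] by simp
    with \<psi>plim[of j x] have "(\<lambda>m. 0::real) \<longlonglongrightarrow> D\<psi> j x" by simp
    then show ?thesis using LIMSEQ_unique[OF tendsto_const] by metis
  qed
  have D\<psi>B: "\<bar>D\<psi> j x\<bar> \<le> B" for j x
  proof -
    have "(\<lambda>m. \<bar>partial j (\<psi> m) x\<bar>) \<longlonglongrightarrow> \<bar>D\<psi> j x\<bar>" by (rule tendsto_rabs[OF \<psi>plim])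
    then show ?thesis by (rule LIMSEQ_le_const2) (use \<psi>pB in auto)
  qed
  have B0: "B \<ge> 0" using \<psi>B[of 0 0] by simp
  have S\<sigma>_c: "continuous_on KK (\<lambda>x. \<Sum>j\<in>UNIV. \<Sum>i\<in>UNIV. \<bar>\<sigma> x $ i $ j\<bar>)"
      by (intro continuous_intros continuous_on_subset[OF sigma_cont]) auto
  obtain S\<sigma> where S\<sigma>0: "S\<sigma> \<ge> 0" and S\<sigma>: "\<And>x. x \<in> KK \<Longrightarrow> \<bar>\<Sum>j\<in>UNIV. \<Sum>i\<in>UNIV. \<bar>\<sigma> x $ i $ j\<bar>\<bar> \<le> S\<sigma>"
    using cbound[OF KKc S\<sigma>_c] by blast
  have B\<phi>_c: "continuous_on KK (\<lambda>x. \<Sum>j\<in>UNIV. \<bar>partial j \<phi> x\<bar>)"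
      by (intro continuous_intros continuous_on_subset[OF ph_pc KK\<Omega>])
  obtain B\<phi> where B\<phi>0: "B\<phi> \<ge> 0" and B\<phi>: "\<And>x. x \<in> KK \<Longrightarrow> \<bar>\<Sum>j\<in>UNIV. \<bar>partial j \<phi> x\<bar>\<bar> \<le> B\<phi>"
    using cbound[OF KKc B\<phi>_c] by blast
  have Bu_c: "continuous_on KK (\<lambda>x. \<Sum>j\<in>UNIV. cmod (partial j u x))"
      by (intro continuous_intros continuous_on_subset[OF u_pc KK\<Omega>])
  obtain Bu where Bu0: "Bu \<ge> 0" and Bu: "\<And>x. x \<in> KK \<Longrightarrow> \<bar>\<Sum>j\<in>UNIV. cmod (partial j u x)\<bar> \<le> Bu"
    using cbound[OF KKc Bu_c] by blast
  have Bp_c: "continuous_on KK (\<lambda>x. \<bar>\<phi> x\<bar> powr (p - 1))"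
      using p by (intro continuous_on_powr' continuous_intros continuous_on_subset[OF ph_c KK\<Omega>]) auto
  obtain Bp where Bp0: "Bp \<ge> 0" and Bp: "\<And>x. x \<in> KK \<Longrightarrow> \<bar>\<bar>\<phi> x\<bar> powr (p - 1)\<bar> \<le> Bp"
    using cbound[OF KKc Bp_c] by blast
  have gb: "norm (hdotZ \<sigma> Z f x) \<le> norm (Z x) * S\<sigma> * (\<Sum>j\<in>UNIV. norm (partial j f x))"
    if "x \<in> KK" for f :: "real^'n \<Rightarrow> 'b::real_normed_vector" and x
  proof -
    have "norm (hdotZ \<sigma> Z f x) \<le> norm (Z x) * (\<Sum>j\<in>UNIV. \<Sum>i\<in>UNIV. \<bar>\<sigma> x $ i $ j\<bar>) * (\<Sum>j\<in>UNIV. norm (partial j f x))"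
      unfolding hdotZ_alt by (rule gbound)
    also have "\<dots> \<le> norm (Z x) * S\<sigma> * (\<Sum>j\<in>UNIV. norm (partial j f x))"
      using S\<sigma>[OF that] by (intro mult_right_mono mult_left_mono sum_nonneg) auto
    finally show ?thesis .
  qed
  define G0 where "G0 x = (\<Sum>j\<in>UNIV. cc x j * D\<psi> j x)" for x
  have G0alt: "G0 x = (\<Sum>j\<in>UNIV. cc x j *\<^sub>R D\<psi> j x)" for x by (simp add: G0_def)
  have b_ph: "\<bar>hdotZ \<sigma> Z \<phi> x\<bar> \<le> norm (Z x) * (S\<sigma> * B\<phi>)" if "x \<in> KK" for x
    using gb[OF that, of \<phi>] B\<phi>[OF that] S\<sigma>0 by (simp add: mult.assoc) (meson mult_left_mono norm_ge_zero order_trans abs_ge_self mult_nonneg_nonneg)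
  have gb2: "norm (hdotZ \<sigma> Z f x) \<le> norm (Z x) * (S\<sigma> * T)"
    if "x \<in> KK" "(\<Sum>j\<in>UNIV. norm (partial j f x)) \<le> T" for f :: "real^'n \<Rightarrow> 'b::real_normed_vector" and x T
  proof -
    have "norm (Z x) * S\<sigma> * (\<Sum>j\<in>UNIV. norm (partial j f x)) \<le> norm (Z x) * S\<sigma> * T"
      using S\<sigma>0 that(2) by (intro mult_left_mono) auto
    then show ?thesis using gb[OF that(1), of f] by (simp add: mult.assoc)
  qed
  have b_psi: "\<bar>hdotZ \<sigma> Z (\<psi> m) x\<bar> \<le> norm (Z x) * (S\<sigma> * (real CARD('n) * B))" if "x \<in> KK" for m x
  proof -
    have "(\<Sum>j\<in>UNIV. norm (partial j (\<psi> m) x)) \<le> (\<Sum>j\<in>(UNIV::'n set). B)"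
      by (intro sum_mono) (simp add: \<psi>pB)
    then show ?thesis using gb2[OF that, of "\<psi> m"] by simp
  qed
  have b_u: "cmod (hdotZ \<sigma> Z u x) \<le> norm (Z x) * (S\<sigma> * Bu)" if "x \<in> KK" for x
    using gb2[OF that, of u Bu] Bu[OF that] by simp
  have b_G0: "\<bar>G0 x\<bar> \<le> norm (Z x) * (S\<sigma> * (real CARD('n) * B))" if "x \<in> KK" for x
  proof -
    have "norm (G0 x) \<le> norm (Z x) * (\<Sum>j\<in>UNIV. \<Sum>i\<in>UNIV. \<bar>\<sigma> x $ i $ j\<bar>) * (\<Sum>j\<in>UNIV. norm (D\<psi> j x))"
      unfolding G0alt cc_def by (rule gbound)
    also have "\<dots> \<le> norm (Z x) * S\<sigma> * (\<Sum>j\<in>(UNIV::'n set). B)"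
      using S\<sigma>[OF that] S\<sigma>0 D\<psi>B by (intro mult_mono mult_left_mono sum_mono sum_nonneg) auto
    finally show ?thesis by (simp add: mult.assoc)
  qed
  have z_psi: "hdotZ \<sigma> Z (\<psi> m) x = 0" if "x \<notin> K1" for m x
    by (simp add: hd \<psi>pz[OF that])
  have z_G0: "G0 x = 0" if "x \<notin> K1" for x
    by (simp add: G0_def D\<psi>K1[OF that])
  have z_u: "hdotZ \<sigma> Z u x = 0" if "x \<notin> K0" for x
    by (simp add: hd u_p0[OF that])
  define M where "M = lebesgue_on \<Omega>"
  have spM: "space M = \<Omega>" by (simp add: M_def)
  have mc: "f \<in> borel_measurable M" if "continuous_on \<Omega> f" for f :: "real^'n \<Rightarrow> real"
    unfolding M_def by (rule continuous_imp_measurable_on_sets_lebesgue[OF that \<Omega>L])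
  have mcC: "f \<in> borel_measurable M" if "continuous_on \<Omega> f" for f :: "real^'n \<Rightarrow> complex"
    unfolding M_def by (rule continuous_imp_measurable_on_sets_lebesgue[OF that \<Omega>L])
  have mZ: "(\<lambda>x. Z x $ i) \<in> borel_measurable M" for i
    unfolding M_def by (rule measurable_compose[OF Z_meas borel_measurable_nth])
  have mnZ: "(\<lambda>x. norm (Z x)) \<in> borel_measurable M"
    unfolding M_def by (rule measurable_compose[OF Z_meas borel_measurable_norm])
  have mV: "V \<in> borel_measurable M" using V_meas by (simp add: M_def)
  have mcc: "(\<lambda>x. cc x j) \<in> borel_measurable M" for j
    unfolding cc_def
    by (intro borel_measurable_sum borel_measurable_times mZ mc continuous_on_subset[OF sigma_cont]) auto
  have mh: "(\<lambda>x. hdotZ \<sigma> Z f x) \<in> borel_measurable M"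
    if "\<And>j. (\<lambda>x. partial j f x) \<in> borel_measurable M" for f :: "real^'n \<Rightarrow> real"
    unfolding hd by (intro borel_measurable_sum borel_measurable_scaleR mcc that)
  have mhC: "(\<lambda>x. hdotZ \<sigma> Z f x) \<in> borel_measurable M"
    if "\<And>j. (\<lambda>x. partial j f x) \<in> borel_measurable M" for f :: "real^'n \<Rightarrow> complex"
    unfolding hd by (intro borel_measurable_sum borel_measurable_scaleR mcc that)
  have mgph: "(\<lambda>x. hdotZ \<sigma> Z \<phi> x) \<in> borel_measurable M"
    by (intro mh mc ph_pc)
  have mgpsi: "(\<lambda>x. hdotZ \<sigma> Z (\<psi> m) x) \<in> borel_measurable M" for m
    by (intro mh mc continuous_on_subset[OF \<psi>pc]) auto
  have mG0: "G0 \<in> borel_measurable M"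
    unfolding G0_def[abs_def] by (intro borel_measurable_sum borel_measurable_times mcc mc continuous_on_subset[OF D\<psi>c]) auto
  have mgu: "(\<lambda>x. hdotZ \<sigma> Z u x) \<in> borel_measurable M"
    by (intro mhC mcC u_pc)
  have VZKK: "set_integrable lebesgue KK (\<lambda>x. V x * norm (Z x) powr p)"
    using VZ_loc KKc KK\<Omega> unfolding loc_integrable_def by blast
  have WKK: "set_integrable lebesgue KK W"
    using W_loc KKc KK\<Omega> unfolding loc_integrable_def by blast
  have WK1: "set_integrable lebesgue K1 W"
    using W_loc K1c K1\<Omega> unfolding loc_integrable_def by blast
  have iVZ: "integrable M (\<lambda>x. indicator KK x * (V x * norm (Z x) powr p))"
    unfolding M_def by (rule int_M_from_set[OF VZKK KK\<Omega> \<Omega>L])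
  have iW: "integrable M (\<lambda>x. indicator KK x * \<bar>W x\<bar>)"
    unfolding M_def by (rule int_M_from_set[OF set_integrable_abs[OF WKK] KK\<Omega> \<Omega>L])
  define gph where "gph x = hdotZ \<sigma> Z \<phi> x" for x
  define CL where "CL = (S\<sigma> * B\<phi>) powr (p - 1) * (S\<sigma> * (real CARD('n) * B))"
  define wL where "wL x = CL * (indicator KK x * (V x * norm (Z x) powr p))" for x
  have iwL: "integrable M wL" unfolding wL_def using iVZ by simp
  have boundL: "\<bar>V x * \<bar>gph x\<bar> powr (p - 2) * gph x * h\<bar> \<le> wL x"
    if "x \<in> \<Omega>" "x \<in> KK \<Longrightarrow> \<bar>h\<bar> \<le> norm (Z x) * (S\<sigma> * (real CARD('n) * B))" "x \<notin> KK \<Longrightarrow> h = 0" for x h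
  proof (cases "x \<in> KK")
    case True
    have "\<bar>V x * \<bar>gph x\<bar> powr (p - 2) * gph x * h\<bar> \<le> V x * norm (Z x) powr p * CL"
      unfolding CL_def
      by (rule est[OF p V_nonneg[OF that(1)] norm_ge_zero _ b_ph[OF True, folded gph_def] that(2)[OF True]])
         (use S\<sigma>0 B\<phi>0 in simp)
    then show ?thesis using True by (simp add: wL_def algebra_simps)
  next
    case False
    then show ?thesis using that(3)[OF False] by (simp add: wL_def)
  qed
  have mLm: "(\<lambda>x. V x * \<bar>gph x\<bar> powr (p - 2) * gph x * hdotZ \<sigma> Z (\<psi> m) x) \<in> borel_measurable M" for m
    unfolding gph_def using mV mgph mgpsi by measurable
  have mL0: "(\<lambda>x. V x * \<bar>gph x\<bar> powr (p - 2) * gph x * G0 x) \<in> borel_measurable M"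
    unfolding gph_def using mV mgph mG0 by measurable
  have limL: "(\<lambda>m. V x * \<bar>gph x\<bar> powr (p - 2) * gph x * hdotZ \<sigma> Z (\<psi> m) x) \<longlonglongrightarrow> V x * \<bar>gph x\<bar> powr (p - 2) * gph x * G0 x" for x
  proof -
    have "(\<lambda>m. \<Sum>j\<in>UNIV. cc x j * partial j (\<psi> m) x) \<longlonglongrightarrow> (\<Sum>j\<in>UNIV. cc x j * D\<psi> j x)"
      by (intro tendsto_sum tendsto_mult_left \<psi>plim)
    then have "(\<lambda>m. hdotZ \<sigma> Z (\<psi> m) x) \<longlonglongrightarrow> G0 x" by (simp add: hd G0_def)
    then show ?thesis by (rule tendsto_mult_left)
  qed
  have L_int: "integrable M (\<lambda>x. V x * \<bar>gph x\<bar> powr (p - 2) * gph x * G0 x)"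
    and L_lim: "(\<lambda>m. integral\<^sup>L M (\<lambda>x. V x * \<bar>gph x\<bar> powr (p - 2) * gph x * hdotZ \<sigma> Z (\<psi> m) x))
        \<longlonglongrightarrow> integral\<^sup>L M (\<lambda>x. V x * \<bar>gph x\<bar> powr (p - 2) * gph x * G0 x)"
  proof -
    have bnd: "AE x in M. norm (V x * \<bar>gph x\<bar> powr (p - 2) * gph x * hdotZ \<sigma> Z (\<psi> m) x) \<le> wL x" for m
    proof (rule AE_I2)
      fix x assume "x \<in> space M"
      then have x: "x \<in> \<Omega>" by (simp add: spM)
      show "norm (V x * \<bar>gph x\<bar> powr (p - 2) * gph x * hdotZ \<sigma> Z (\<psi> m) x) \<le> wL x"
        using boundL[OF x, of "hdotZ \<sigma> Z (\<psi> m) x"] b_psi[of x m] z_psi[of x m] K1KK by auto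
    qed
    show "integrable M (\<lambda>x. V x * \<bar>gph x\<bar> powr (p - 2) * gph x * G0 x)"
      by (rule integrable_dominated_convergence[OF mL0 mLm iwL AE_I2[OF limL] bnd])
    show "(\<lambda>m. integral\<^sup>L M (\<lambda>x. V x * \<bar>gph x\<bar> powr (p - 2) * gph x * hdotZ \<sigma> Z (\<psi> m) x))
        \<longlonglongrightarrow> integral\<^sup>L M (\<lambda>x. V x * \<bar>gph x\<bar> powr (p - 2) * gph x * G0 x)"
      by (rule integral_dominated_convergence[OF mL0 mLm iwL AE_I2[OF limL] bnd])
  qed
  define wR where "wR x = (Bp * B) * (indicator KK x * \<bar>W x\<bar>)" for x
  have iwR: "integrable M wR" unfolding wR_def using iW by simp
  have boundR: "\<bar>W x * \<bar>\<phi> x\<bar> powr (p - 2) * \<phi> x * h\<bar> \<le> wR x"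
    if "\<bar>h\<bar> \<le> B" "x \<notin> K1 \<Longrightarrow> h = 0" for x h
  proof (cases "x \<in> KK")
    case True
    have pp: "\<bar>\<phi> x\<bar> powr (p - 2) * \<bar>\<phi> x\<bar> = \<bar>\<phi> x\<bar> powr (p - 1)"
      by (subst mult.commute, subst powr_mult_base) auto
    have "\<bar>W x * \<bar>\<phi> x\<bar> powr (p - 2) * \<phi> x * h\<bar> = \<bar>W x\<bar> * (\<bar>\<phi> x\<bar> powr (p - 2) * \<bar>\<phi> x\<bar>) * \<bar>h\<bar>"
      by (simp add: abs_mult)
    also have "\<dots> = \<bar>W x\<bar> * \<bar>\<phi> x\<bar> powr (p - 1) * \<bar>h\<bar>" by (simp only: pp)
    also have "\<dots> \<le> \<bar>W x\<bar> * Bp * B"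
      using Bp[OF True] that(1) Bp0 by (intro mult_mono mult_left_mono) auto
    finally show ?thesis using True by (simp add: wR_def algebra_simps)
  next
    case False
    then show ?thesis using that(2) K1KK by (auto simp: wR_def)
  qed
  have mWK1: "(\<lambda>x. indicator K1 x * W x) \<in> borel_measurable M"
    unfolding M_def by (rule W_meas[OF WK1])
  have mph: "\<phi> \<in> borel_measurable M" by (rule mc[OF ph_c])
  have mpsi: "\<psi> m \<in> borel_measurable M" for m by (rule mc, rule continuous_on_subset[OF \<psi>c]) auto
  have mpsi0: "\<psi>0 \<in> borel_measurable M" by (rule mc, rule continuous_on_subset[OF \<psi>0c]) auto
  have eqRm: "(\<lambda>x. W x * \<bar>\<phi> x\<bar> powr (p - 2) * \<phi> x * \<psi> m x)
      = (\<lambda>x. (indicator K1 x * W x) * \<bar>\<phi> x\<bar> powr (p - 2) * \<phi> x * \<psi> m x)" for m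
    by (rule ext) (auto simp: indicator_def \<psi>z)
  have eqR0: "(\<lambda>x. W x * \<bar>\<phi> x\<bar> powr (p - 2) * \<phi> x * \<psi>0 x)
      = (\<lambda>x. (indicator K1 x * W x) * \<bar>\<phi> x\<bar> powr (p - 2) * \<phi> x * \<psi>0 x)"
    by (rule ext) (auto simp: indicator_def \<psi>0K1)
  have mRm: "(\<lambda>x. W x * \<bar>\<phi> x\<bar> powr (p - 2) * \<phi> x * \<psi> m x) \<in> borel_measurable M" for m
    unfolding eqRm using mWK1 mph mpsi by measurable
  have mR0: "(\<lambda>x. W x * \<bar>\<phi> x\<bar> powr (p - 2) * \<phi> x * \<psi>0 x) \<in> borel_measurable M"
    unfolding eqR0 using mWK1 mph mpsi0 by measurable
  have limR: "(\<lambda>m. W x * \<bar>\<phi> x\<bar> powr (p - 2) * \<phi> x * \<psi> m x) \<longlonglongrightarrow> W x * \<bar>\<phi> x\<bar> powr (p - 2) * \<phi> x * \<psi>0 x" for x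
    by (intro tendsto_mult_left \<psi>lim)
  have bndR: "AE x in M. norm (W x * \<bar>\<phi> x\<bar> powr (p - 2) * \<phi> x * \<psi> m x) \<le> wR x" for m
    using boundR[OF \<psi>B \<psi>z] by simp
  have R_int: "integrable M (\<lambda>x. W x * \<bar>\<phi> x\<bar> powr (p - 2) * \<phi> x * \<psi>0 x)"
    by (rule integrable_dominated_convergence[OF mR0 mRm iwR AE_I2[OF limR] bndR])
  have R_lim: "(\<lambda>m. integral\<^sup>L M (\<lambda>x. W x * \<bar>\<phi> x\<bar> powr (p - 2) * \<phi> x * \<psi> m x))
        \<longlonglongrightarrow> integral\<^sup>L M (\<lambda>x. W x * \<bar>\<phi> x\<bar> powr (p - 2) * \<phi> x * \<psi>0 x)"
    by (rule integral_dominated_convergence[OF mR0 mRm iwR AE_I2[OF limR] bndR])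
  have sol_m: "integral\<^sup>L M (\<lambda>x. V x * \<bar>gph x\<bar> powr (p - 2) * gph x * hdotZ \<sigma> Z (\<psi> m) x)
      = lam * integral\<^sup>L M (\<lambda>x. W x * \<bar>\<phi> x\<bar> powr (p - 2) * \<phi> x * \<psi> m x)" for m
    using phi_sol[OF \<psi>tf[of m]] unfolding setint_M[OF \<Omega>L] M_def gph_def .
  have LR: "integral\<^sup>L M (\<lambda>x. V x * \<bar>gph x\<bar> powr (p - 2) * gph x * G0 x)
      = lam * integral\<^sup>L M (\<lambda>x. W x * \<bar>\<phi> x\<bar> powr (p - 2) * \<phi> x * \<psi>0 x)"
  proof (rule LIMSEQ_unique[OF L_lim])
    show "(\<lambda>m. integral\<^sup>L M (\<lambda>x. V x * \<bar>gph x\<bar> powr (p - 2) * gph x * hdotZ \<sigma> Z (\<psi> m) x))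
      \<longlonglongrightarrow> lam * integral\<^sup>L M (\<lambda>x. W x * \<bar>\<phi> x\<bar> powr (p - 2) * \<phi> x * \<psi>0 x)"
      unfolding sol_m by (rule tendsto_mult_left[OF R_lim])
  qed
  define wA where "wA x = (S\<sigma> * Bu) powr p * (indicator KK x * (V x * norm (Z x) powr p))" for x
  have iwA: "integrable M wA" unfolding wA_def using iVZ by simp
  have mA: "(\<lambda>x. V x * cmod (hdotZ \<sigma> Z u x) powr p) \<in> borel_measurable M"
    using mV mgu by measurable
  have A_int: "integrable M (\<lambda>x. V x * cmod (hdotZ \<sigma> Z u x) powr p)"
  proof (rule Bochner_Integration.integrable_bound[OF iwA mA AE_I2])
    fix x assume "x \<in> space M"
    then have x: "x \<in> \<Omega>" by (simp add: spM)
    show "norm (V x * cmod (hdotZ \<sigma> Z u x) powr p) \<le> norm (wA x)"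
    proof (cases "x \<in> KK")
      case True
      have "V x * cmod (hdotZ \<sigma> Z u x) powr p \<le> V x * (norm (Z x) * (S\<sigma> * Bu)) powr p"
        using p V_nonneg[OF x] b_u[OF True] by (intro mult_left_mono powr_mono2) auto
      also have "\<dots> = wA x" using True by (simp add: wA_def powr_mult algebra_simps)
      finally show ?thesis using V_nonneg[OF x] True by (simp add: wA_def)
    next
      case False
      then have "x \<notin> K0" using K0KK by blast
      then show ?thesis using p by (simp add: z_u)
    qed
  qed
  have hq: "hdotZ \<sigma> Z (\<lambda>y. u y / complex_of_real (\<phi> y)) x
      = (hdotZ \<sigma> Z u x * complex_of_real (\<phi> x) - u x * complex_of_real (gph x)) / complex_of_real ((\<phi> x)\<^sup>2)"
    if x: "x \<in> \<Omega>" for x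
  proof -
    have pq: "partial j (\<lambda>y. u y / complex_of_real (\<phi> y)) x
        = (partial j u x * complex_of_real (\<phi> x) - u x * complex_of_real (partial j \<phi> x)) / complex_of_real ((\<phi> x)\<^sup>2)" for j
    proof -
      have dph: "((\<lambda>t. \<phi> (x + t *\<^sub>R axis j 1)) has_real_derivative partial j \<phi> x) (at 0)"
        using partial_deriv[OF ph_pe[OF x]] by (simp add: has_real_derivative_iff_has_vector_derivative)
      have "((\<lambda>t. u (x + t *\<^sub>R axis j 1) / complex_of_real (\<phi> (x + t *\<^sub>R axis j 1))) has_vector_derivative
          (partial j u x * complex_of_real (\<phi> (x + 0 *\<^sub>R axis j 1)) - u (x + 0 *\<^sub>R axis j 1) * complex_of_real (partial j \<phi> x))
            / complex_of_real ((\<phi> (x + 0 *\<^sub>R axis j 1))\<^sup>2)) (at 0)"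
        by (rule quot_deriv[OF partial_deriv[OF u_pe[OF x]] dph]) (simp add: phi_nz[OF x])
      then have "((\<lambda>t. u (x + t *\<^sub>R axis j 1) / complex_of_real (\<phi> (x + t *\<^sub>R axis j 1))) has_vector_derivative
          (partial j u x * complex_of_real (\<phi> x) - u x * complex_of_real (partial j \<phi> x)) / complex_of_real ((\<phi> x)\<^sup>2)) (at 0)"
        by simp
      then show ?thesis by (rule partial_from_deriv(2))
    qed
    have "hdotZ \<sigma> Z (\<lambda>y. u y / complex_of_real (\<phi> y)) x
        = (\<Sum>j\<in>UNIV. cc x j *\<^sub>R ((partial j u x * complex_of_real (\<phi> x) - u x * complex_of_real (partial j \<phi> x)) / complex_of_real ((\<phi> x)\<^sup>2)))"
      unfolding hd pq ..
    also have "\<dots> = ((\<Sum>j\<in>UNIV. cc x j *\<^sub>R partial j u x) * complex_of_real (\<phi> x) - u x * complex_of_real (\<Sum>j\<in>UNIV. cc x j * partial j \<phi> x)) / complex_of_real ((\<phi> x)\<^sup>2)"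
      by (rule sum_quot)
    finally show ?thesis by (simp add: hd gph_def)
  qed
  have G0x: "G0 x = (p * cmod (u x) powr (p - 2) * Re (cnj (u x) * hdotZ \<sigma> Z u x)) * (\<phi> x * \<bar>\<phi> x\<bar> powr (- p))
      + cmod (u x) powr p * ((1 - p) * \<bar>\<phi> x\<bar> powr (- p) * gph x)" if x: "x \<in> \<Omega>" for x
  proof -
    have "G0 x = (\<Sum>j\<in>UNIV. cc x j * ((p * cmod (u x) powr (p - 2)) * Re (cnj (u x) * partial j u x) * Q x
        + N x * (((1 - p) * \<bar>\<phi> x\<bar> powr (- p)) * partial j \<phi> x)))"
      unfolding G0_def D\<psi>_def DN_def using x by (simp add: mult.assoc)
    also have "\<dots> = (p * cmod (u x) powr (p - 2)) * Re (cnj (u x) * (\<Sum>j\<in>UNIV. cc x j *\<^sub>R partial j u x)) * Q x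
        + N x * (((1 - p) * \<bar>\<phi> x\<bar> powr (- p)) * (\<Sum>j\<in>UNIV. cc x j * partial j \<phi> x))"
      by (rule sum_G0)
    finally show ?thesis by (simp add: hd gph_def Q_def N_def mult.assoc)
  qed
  have Cpx: "Cp p (complex_of_real (V x powr (1 / p)) * hdotZ \<sigma> Z u x)
                   (complex_of_real (V x powr (1 / p) * \<phi> x)
                      * hdotZ \<sigma> Z (\<lambda>y. u y / complex_of_real (\<phi> y)) x)
      = V x * cmod (hdotZ \<sigma> Z u x) powr p - V x * \<bar>gph x\<bar> powr (p - 2) * gph x * G0 x" if x: "x \<in> \<Omega>" for x
    unfolding hq[OF x] G0x[OF x] by (rule Cp_ident[OF p V_nonneg[OF x] phi_nz[OF x]])
  have Wx: "W x * cmod (u x) powr p = W x * \<bar>\<phi> x\<bar> powr (p - 2) * \<phi> x * \<psi>0 x" if x: "x \<in> \<Omega>" for x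
  proof -
    have ph: "\<phi> x \<noteq> 0" by (rule phi_nz[OF x])
    have "\<bar>\<phi> x\<bar> powr (p - 2) * \<bar>\<phi> x\<bar> powr (- p) = \<bar>\<phi> x\<bar> powr (- 2)"
      by (simp add: powr_add[symmetric])
    also have "\<dots> = inverse ((\<phi> x)\<^sup>2)" using ph by (simp add: powr_minus powr2)
    finally have e: "\<bar>\<phi> x\<bar> powr (p - 2) * \<bar>\<phi> x\<bar> powr (- p) = inverse ((\<phi> x)\<^sup>2)" .
    have "W x * \<bar>\<phi> x\<bar> powr (p - 2) * \<phi> x * \<psi>0 x
        = W x * cmod (u x) powr p * ((\<bar>\<phi> x\<bar> powr (p - 2) * \<bar>\<phi> x\<bar> powr (- p)) * (\<phi> x * \<phi> x))"
      using x by (simp add: \<psi>0_def N_def Q_def algebra_simps)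
    also have "\<dots> = W x * cmod (u x) powr p" unfolding e using ph by (simp add: power2_eq_square field_simps)
    finally show ?thesis by (rule sym)
  qed
  have I1: "(LINT x:\<Omega>|lebesgue. V x * norm (hdotZ \<sigma> Z u x) powr p) = integral\<^sup>L M (\<lambda>x. V x * cmod (hdotZ \<sigma> Z u x) powr p)"
    unfolding setint_M[OF \<Omega>L] M_def ..
  have I2: "(LINT x:\<Omega>|lebesgue. W x * norm (u x) powr p) = integral\<^sup>L M (\<lambda>x. W x * \<bar>\<phi> x\<bar> powr (p - 2) * \<phi> x * \<psi>0 x)"
    unfolding setint_M[OF \<Omega>L] M_def[symmetric]
    by (rule Bochner_Integration.integral_cong[OF refl]) (simp add: Wx spM)
  have I3: "(LINT x:\<Omega>|lebesgue.
              Cp p (complex_of_real (V x powr (1 / p)) * hdotZ \<sigma> Z u x)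
                   (complex_of_real (V x powr (1 / p) * \<phi> x)
                      * hdotZ \<sigma> Z (\<lambda>y. u y / complex_of_real (\<phi> y)) x))
      = integral\<^sup>L M (\<lambda>x. V x * cmod (hdotZ \<sigma> Z u x) powr p - V x * \<bar>gph x\<bar> powr (p - 2) * gph x * G0 x)"
    unfolding setint_M[OF \<Omega>L] M_def[symmetric]
    by (rule Bochner_Integration.integral_cong[OF refl], unfold spM, rule Cpx)
  also have "\<dots> = integral\<^sup>L M (\<lambda>x. V x * cmod (hdotZ \<sigma> Z u x) powr p) - integral\<^sup>L M (\<lambda>x. V x * \<bar>gph x\<bar> powr (p - 2) * gph x * G0 x)"
    by (rule Bochner_Integration.integral_diff[OF A_int L_int])
  finally show ?thesis unfolding I1 I2 LR by simp
qed

end
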